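(* Suppose $F\in\mathcal A$. There exists $\epsilon>0$ such that for every $n$ there is a holomorphic function $f_n$ on $\{|z|<\epsilon\}$ with $f_n(0)=w_n$ whose graph $\Sigma_n=\{(z,f_n(z)):|z|<\epsilon\}$ is a preimage of $\Sigma_0$, i.e. $F^k(\Sigma_n)\subset\Sigma_0$ for some $k\ge 0$. The graphs $\Sigma_n$ are pairwise disjoint, and there are no other points $(z,w)$ with $|z|<\epsilon$ lying in $\bigcup_{k\ge0}F^{-k}(\Sigma_0)$ besides those on the graphs $\Sigma_n$.
   Context: Let $F(z,w)=(P(z),Q(z,w))$ be a polynomial skew product of $\mathbb C^2$. Let $U=\{z\in\mathbb C: P^n(z)\to 0\}$ be the basin of attraction of $0$ for $P$, let $\Omega=\{(z,w)\in\mathbb C^2: F^n(z,w)\to(0,0)\}$ be the basin of attraction of $(0,0)$ for $F$, and for $z\in\mathbb C$ let $\Omega_z=\{w\in\mathbb C:(z,w)\in\Omega\}$ be the slice of $\Omega$ over $z$. We say $F$ belongs to the class $\mathcal A$ if: (i) $P$ is a polynomial of degree $d\ge 2$ with $P(0)=0$ and $0<|P'(0)|=a<1$; (ii) writing $Q(z,w)=\sum_{j=0}^d Q_j(w)z^j$ with polynomials $Q_j$, we have $\deg Q_j\le d-1$ for all $j\ge 1$, $Q_0(w)=Q(0,w)$ has degree exactly $d$, $Q_0(0)=0$, $0<|Q_0'(0)|=b<1$, $a<b$, and $\frac{\partial Q}{\partial z}(0,0)=0$ (so $(0,0)$ is an attracting fixed point of $F$); (iii) condition $\mathcal C$ holds: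 (C1) for every $z\in\partial U$ there is no $w$ with $(z,w)\in\overline{\Omega}$ and $\frac{\partial Q}{\partial w}(z,w)=0$; (C2) if $w\notin\Omega_0$ and $\frac{\partial Q}{\partial w}(0,w)=0$, then $w$ lies in the basin of infinity of $Q_0$ (i.e. $Q_0^n(w)\to\infty$); (C3) if $w\in\Omega_0$ and $\frac{\partial Q}{\partial w}(0,w)=0$, then $F^n(0,w)\neq(0,0)$ for all integers $n\ge1$; (C4) if $z\in U$ and $P'(z)=0$, then $P^n(z)\ne 0$ for all integers $n\ge 1$. Since $DF(0,0)$ is diagonal with eigenvalues $P'(0)$ and $Q_0'(0)$ of moduli $a<b<1$, $F$ has a local strong stable manifold $\Sigma$ at $(0,0)$: a complex curve through $(0,0)$ tangent to the $z$-axis, consisting of points whose orbits converge to $(0,0)$ at the faster rate. Near the origin it is a graph $\Sigma_0=\{(z,f_0(z)): |z|<\epsilon\}$ with $f_0$ holomorphic and $f_0(0)=0$. Let $(0,w_n)$, $n=0,1,2,\dots$, with $w_0=0$, enumerate the points of $\{0\}\times\mathbb C$ satisfying $F^k(0,w_n)=(0,0)$ for some $k\ge 0$ (the preimages of $(0,0)$ in the $w$-axis). *)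

theory Defs
  imports "HOL-Complex_Analysis.Complex_Analysis" "HOL-Computational_Algebra.Polynomial"
begin

text \<open>A polynomial skew product F(z,w) = (P(z), Q(z,w)) with
  Q(z,w) = sum_{j=0}^{d} Q_j(w) z^j, d = degree P.  The coefficient polynomials
  are given by a function Qc :: nat => complex poly (only j <= d is used).\<close>

definition Qval :: "complex poly \<Rightarrow> (nat \<Rightarrow> complex poly) \<Rightarrow> complex \<Rightarrow> complex \<Rightarrow> complex" where
  "Qval P Qc z w = (\<Sum>j\<le>degree P. poly (Qc j) w * z ^ j)"

definition Qw :: "complex poly \<Rightarrow> (nat \<Rightarrow> complex poly) \<Rightarrow> complex \<Rightarrow> complex \<Rightarrow> complex" where
  "Qw P Qc z w = (\<Sum>j\<le>degree P. poly (pderiv (Qc j)) w * z ^ j)"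

definition Qz :: "complex poly \<Rightarrow> (nat \<Rightarrow> complex poly) \<Rightarrow> complex \<Rightarrow> complex \<Rightarrow> complex" where
  "Qz P Qc z w = (\<Sum>j\<in>{1..degree P}. of_nat j * poly (Qc j) w * z ^ (j - 1))"

definition skew :: "complex poly \<Rightarrow> (nat \<Rightarrow> complex poly) \<Rightarrow> complex \<times> complex \<Rightarrow> complex \<times> complex" where
  "skew P Qc = (\<lambda>(z, w). (poly P z, Qval P Qc z w))"

definition basinP :: "complex poly \<Rightarrow> complex set" where
  "basinP P = {z. (\<lambda>n. (poly P ^^ n) z) \<longlonglongrightarrow> 0}"

definition basinF :: "complex poly \<Rightarrow> (nat \<Rightarrow> complex poly) \<Rightarrow> (complex \<times> complex) set" where
  "basinF P Qc = {p. (\<lambda>n. (skew P Qc ^^ n) p) \<longlonglongrightarrow> (0, 0)}"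

definition slice :: "(complex \<times> complex) set \<Rightarrow> complex \<Rightarrow> complex set" where
  "slice S z = {w. (z, w) \<in> S}"

definition condC :: "complex poly \<Rightarrow> (nat \<Rightarrow> complex poly) \<Rightarrow> bool" where
  "condC P Qc \<longleftrightarrow>
     (\<forall>z\<in>frontier (basinP P). \<forall>w. (z, w) \<in> closure (basinF P Qc) \<longrightarrow> Qw P Qc z w \<noteq> 0) \<and>
     (\<forall>w. w \<notin> slice (basinF P Qc) 0 \<and> Qw P Qc 0 w = 0 \<longrightarrow>
          filterlim (\<lambda>n. (poly (Qc 0) ^^ n) w) at_infinity sequentially) \<and>
     (\<forall>w. w \<in> slice (basinF P Qc) 0 \<and> Qw P Qc 0 w = 0 \<longrightarrow>
          (\<forall>n\<ge>1. (skew P Qc ^^ n) (0, w) \<noteq> (0, 0))) \<and>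
     (\<forall>z. z \<in> basinP P \<and> poly (pderiv P) z = 0 \<longrightarrow> (\<forall>n\<ge>1. (poly P ^^ n) z \<noteq> 0))"

definition classA :: "complex poly \<Rightarrow> (nat \<Rightarrow> complex poly) \<Rightarrow> bool" where
  "classA P Qc \<longleftrightarrow>
     (let d = degree P; a = norm (poly (pderiv P) 0); b = norm (poly (pderiv (Qc 0)) 0) in
       d \<ge> 2 \<and> poly P 0 = 0 \<and> 0 < a \<and> a < 1 \<and>
       (\<forall>j\<in>{1..d}. degree (Qc j) \<le> d - 1) \<and>
       degree (Qc 0) = d \<and> poly (Qc 0) 0 = 0 \<and> 0 < b \<and> b < 1 \<and> a < b \<and>
       Qz P Qc 0 0 = 0 \<and>
       condC P Qc)"

definition fast_conv :: "complex poly \<Rightarrow> (nat \<Rightarrow> complex poly) \<Rightarrow> complex \<times> complex \<Rightarrow> bool" where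
  "fast_conv P Qc p \<longleftrightarrow>
     (\<exists>\<rho> C. 0 < \<rho> \<and> \<rho> < norm (poly (pderiv (Qc 0)) 0) \<and>
        (\<forall>n. norm ((skew P Qc ^^ n) p) \<le> C * \<rho> ^ n))"

text \<open>f0 on the disc of radius e0 parametrises the local strong stable manifold of
  (0,0) in the bidisc ball 0 e0 x ball 0 r: the points of the bidisc whose orbit
  stays in the bidisc and converges to (0,0) at the faster rate are exactly the
  points of the graph of f0.\<close>
definition local_strong_stable :: "complex poly \<Rightarrow> (nat \<Rightarrow> complex poly) \<Rightarrow> real \<Rightarrow> real \<Rightarrow> (complex \<Rightarrow> complex) \<Rightarrow> bool" where
  "local_strong_stable P Qc e0 r f0 \<longleftrightarrow>
     0 < e0 \<and> 0 < r \<and> f0 holomorphic_on ball 0 e0 \<and> f0 0 = 0 \<and> deriv f0 0 = 0 \<and>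
     (\<forall>z\<in>ball 0 e0. f0 z \<in> ball 0 r) \<and>
     (\<forall>z\<in>ball 0 e0. \<forall>w\<in>ball 0 r.
        w = f0 z \<longleftrightarrow>
        ((\<forall>n. (skew P Qc ^^ n) (z, w) \<in> ball 0 e0 \<times> ball 0 r) \<and> fast_conv P Qc (z, w)))"

definition graph_on :: "real \<Rightarrow> (complex \<Rightarrow> complex) \<Rightarrow> (complex \<times> complex) set" where
  "graph_on e f = {(z, f z) | z. z \<in> ball 0 e}"

end

theory Submission
  imports Defs
begin


locale LA =
  fixes P :: "complex poly" and Qc :: "nat \<Rightarrow> complex poly"
    and e0 r :: real and f0 :: "complex \<Rightarrow> complex"
  assumes clA: "classA P Qc"
    and lss: "local_strong_stable P Qc e0 r f0"
begin

abbreviation "F \<equiv> skew P Qc"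

fun s :: "nat \<Rightarrow> complex \<Rightarrow> complex \<Rightarrow> complex" where
  "s 0 z u = u"
| "s (Suc n) z u = Qval P Qc ((poly P ^^ n) z) (s n z u)"

lemma F_iter: "(F ^^ n) (z,u) = ((poly P ^^ n) z, s n z u)"
  by (induction n) (auto simp: skew_def)

lemma F_iter_add: "(F ^^ (m + n)) p = (F ^^ m) ((F ^^ n) p)"
  by (simp add: funpow_add)

lemma d2: "degree P \<ge> 2" using clA by (simp add: classA_def Let_def)
lemma P0: "poly P 0 = 0" using clA by (simp add: classA_def Let_def)
lemma aless1: "norm (poly (pderiv P) 0) < 1" using clA by (simp add: classA_def Let_def)
lemma bless1: "norm (poly (pderiv (Qc 0)) 0) < 1" using clA by (simp add: classA_def Let_def)
lemma bpos: "0 < norm (poly (pderiv (Qc 0)) 0)" using clA by (simp add: classA_def Let_def)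
lemma degQ0: "degree (Qc 0) = degree P" using clA by (simp add: classA_def Let_def)
lemma degQj: "j \<in> {1..degree P} \<Longrightarrow> degree (Qc j) \<le> degree P - 1" using clA by (simp add: classA_def Let_def)
lemma Q00: "poly (Qc 0) 0 = 0" using clA by (simp add: classA_def Let_def)
lemma C2: "w \<notin> slice (basinF P Qc) 0 \<Longrightarrow> Qw P Qc 0 w = 0 \<Longrightarrow>
          filterlim (\<lambda>n. (poly (Qc 0) ^^ n) w) at_infinity sequentially"
  using clA by (simp add: classA_def Let_def condC_def)
lemma C3: "w \<in> slice (basinF P Qc) 0 \<Longrightarrow> Qw P Qc 0 w = 0 \<Longrightarrow> n \<ge> 1 \<Longrightarrow>
          (F ^^ n) (0, w) \<noteq> (0, 0)"
  using clA by (simp add: classA_def Let_def condC_def)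

lemma e0pos: "0 < e0" and rpos: "0 < r" and f0hol: "f0 holomorphic_on ball 0 e0"
  and f00: "f0 0 = 0" and f0r: "\<And>z. z \<in> ball 0 e0 \<Longrightarrow> f0 z \<in> ball 0 r"
  and lchar: "\<And>z w. z \<in> ball 0 e0 \<Longrightarrow> w \<in> ball 0 r \<Longrightarrow>
        w = f0 z \<longleftrightarrow> ((\<forall>n. (F ^^ n) (z, w) \<in> ball 0 e0 \<times> ball 0 r) \<and> fast_conv P Qc (z, w))"
  using lss unfolding local_strong_stable_def by blast+

lemma Qval_split: "Qval P Qc z w = poly (Qc 0) w + (\<Sum>j\<in>{1..degree P}. poly (Qc j) w * z ^ j)"
proof -
  have "Qval P Qc z w = (\<Sum>j\<in>{0..degree P}. poly (Qc j) w * z ^ j)"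
    by (simp add: Qval_def atMost_atLeast0)
  also have "\<dots> = poly (Qc 0) w + (\<Sum>j\<in>{Suc 0..degree P}. poly (Qc j) w * z ^ j)"
    by (subst sum.atLeast_Suc_atMost) auto
  finally show ?thesis by simp
qed

lemma Qval0: "Qval P Qc 0 w = poly (Qc 0) w"
  by (simp add: Qval_split)

lemma Qw0: "Qw P Qc 0 w = poly (pderiv (Qc 0)) w"
proof -
  have "Qw P Qc 0 w = (\<Sum>j\<in>{0..degree P}. poly (pderiv (Qc j)) w * 0 ^ j)"
    by (simp add: Qw_def atMost_atLeast0)
  also have "\<dots> = poly (pderiv (Qc 0)) w + (\<Sum>j\<in>{Suc 0..degree P}. poly (pderiv (Qc j)) w * 0 ^ j)"
    by (subst sum.atLeast_Suc_atMost) auto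
  finally show ?thesis by simp
qed

lemma s_zero: "s n 0 w = (poly (Qc 0) ^^ n) w"
proof (induction n)
  case (Suc n)
  have "(poly P ^^ n) 0 = 0" by (induction n) (auto simp: P0)
  then show ?case using Suc by (simp add: Qval0)
qed simp

lemma Piter0: "(poly P ^^ n) 0 = 0" by (induction n) (auto simp: P0)

definition "G0 = graph_on e0 f0"
definition "W = {p. \<exists>k. (F ^^ k) p \<in> G0}"

lemma graph_fwd:
  assumes "q \<in> G0" shows "F q \<in> G0"
proof -
  obtain z where z: "z \<in> ball 0 e0" "q = (z, f0 z)" using assms by (auto simp: G0_def graph_on_def)
  have fr: "f0 z \<in> ball 0 r" using f0r z by auto
  have ch: "(\<forall>n. (F ^^ n) (z, f0 z) \<in> ball 0 e0 \<times> ball 0 r) \<and> fast_conv P Qc (z, f0 z)"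
    using lchar[OF z(1) fr] by simp
  obtain z' w' where zw: "F q = (z', w')" by (cases "F q")
  have orb: "(F ^^ n) (z', w') = (F ^^ Suc n) q" for n
    by (metis zw funpow_Suc_right o_apply)
  have z'b: "z' \<in> ball 0 e0" "w' \<in> ball 0 r"
    using ch orb[of 0] z(2) by (metis SigmaE2 funpow_0)+
  have fc: "fast_conv P Qc (z', w')"
  proof -
    obtain \<rho> C where rc: "0 < \<rho>" "\<rho> < norm (poly (pderiv (Qc 0)) 0)"
      "\<forall>n. norm ((F ^^ n) (z, f0 z)) \<le> C * \<rho> ^ n"
      using ch unfolding fast_conv_def by blast
    have "norm ((F ^^ n) (z', w')) \<le> (C * \<rho>) * \<rho> ^ n" for n
      using rc(3)[rule_format, of "Suc n"] orb[of n] z(2) by (simp add: mult.assoc)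
    then show ?thesis unfolding fast_conv_def using rc(1,2) by blast
  qed
  have "(\<forall>n. (F ^^ n) (z', w') \<in> ball 0 e0 \<times> ball 0 r)"
    using ch orb z(2) by metis
  then have "w' = f0 z'" using lchar[OF z'b] fc by blast
  then show ?thesis using zw z'b by (auto simp: G0_def graph_on_def)
qed

lemma graph_fwd_iter: "q \<in> G0 \<Longrightarrow> (F ^^ n) q \<in> G0"
  by (induction n) (auto intro: graph_fwd)

lemma W_later: "(F ^^ k) p \<in> G0 \<Longrightarrow> k \<le> m \<Longrightarrow> (F ^^ m) p \<in> G0"
  by (metis F_iter_add graph_fwd_iter le_add_diff_inverse2)

lemma W_fwd: "p \<in> W \<Longrightarrow> (F ^^ n) p \<in> W"
proof -
  assume "p \<in> W"
  then obtain k where "(F ^^ k) p \<in> G0" by (auto simp: W_def)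
  then have "(F ^^ (k + n)) p \<in> G0" using W_later by simp
  then have "(F ^^ k) ((F ^^ n) p) \<in> G0" by (metis F_iter_add add.commute)
  then show ?thesis by (auto simp: W_def)
qed

end


lemma deriv_contract:
  fixes f :: "complex \<Rightarrow> complex"
  assumes "f 0 = 0" "(f has_field_derivative D) (at 0)" "norm D < \<kappa>"
  shows "\<exists>\<delta>>0. \<forall>z. norm z < \<delta> \<longrightarrow> norm (f z) \<le> \<kappa> * norm z"
proof -
  have lim: "((\<lambda>y. (f y - f 0) / (y - 0)) \<longlongrightarrow> D) (at 0)"
    using assms(2) has_field_derivative_iff by blast
  have "\<forall>\<^sub>F y in at 0. dist ((f y - f 0) / (y - 0)) D < \<kappa> - norm D"
    using tendstoD[OF lim, of "\<kappa> - norm D"] assms(3) by simp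
  then obtain \<delta> where \<delta>: "\<delta> > 0" "\<And>y. y \<noteq> 0 \<Longrightarrow> dist y 0 < \<delta> \<Longrightarrow> dist (f y / y) D < \<kappa> - norm D"
    using assms(1) unfolding eventually_at by auto
  have "norm (f z) \<le> \<kappa> * norm z" if "norm z < \<delta>" for z
  proof (cases "z = 0")
    case True then show ?thesis using assms(1) by simp
  next
    case False
    have "norm (f z / z) \<le> norm D + dist (f z / z) D"
      by (metis dist_norm norm_triangle_sub)
    also have "\<dots> < \<kappa>" using \<delta>(2)[OF False] that by simp
    finally have "norm (f z) / norm z < \<kappa>" by (simp add: norm_divide)
    then show ?thesis using False by (simp add: divide_less_eq less_imp_le)
  qed
  then show ?thesis using \<delta>(1) by blast
qed

lemma poly_sum_le:
  fixes p :: "complex poly"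
  assumes "degree p \<le> n"
  shows "poly p w = (\<Sum>i\<le>n. coeff p i * w ^ i)"
proof -
  have "poly p w = (\<Sum>i\<le>degree p. coeff p i * w ^ i)" by (simp add: poly_altdef)
  also have "\<dots> = (\<Sum>i\<le>n. coeff p i * w ^ i)"
    by (rule sum.mono_neutral_left) (use assms in \<open>auto simp: coeff_eq_0\<close>)
  finally show ?thesis .
qed

lemma poly_bound_ge1:
  fixes p :: "complex poly"
  assumes "degree p \<le> n" "1 \<le> norm w"
  shows "norm (poly p w) \<le> (\<Sum>i\<le>n. norm (coeff p i)) * norm w ^ n"
proof -
  have "norm (poly p w) \<le> (\<Sum>i\<le>n. norm (coeff p i * w ^ i))"
    unfolding poly_sum_le[OF assms(1)] by (rule norm_sum)
  also have "\<dots> \<le> (\<Sum>i\<le>n. norm (coeff p i) * norm w ^ n)"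
    by (rule sum_mono) (auto simp: norm_mult norm_power intro!: mult_left_mono power_increasing assms(2))
  finally show ?thesis by (simp add: sum_distrib_right)
qed

lemma poly_bound_le1:
  fixes p :: "complex poly"
  assumes "norm w \<le> 1"
  shows "norm (poly p w) \<le> (\<Sum>i\<le>degree p. norm (coeff p i))"
proof -
  have "norm (poly p w) \<le> (\<Sum>i\<le>degree p. norm (coeff p i * w ^ i))"
    unfolding poly_altdef by (rule norm_sum)
  also have "\<dots> \<le> (\<Sum>i\<le>degree p. norm (coeff p i))"
    by (rule sum_mono) (auto simp: norm_mult norm_power intro!: mult_left_le power_le_one assms)
  finally show ?thesis .
qed


context LA
begin

lemma fast_conv_W:
  assumes "p \<in> W" shows "fast_conv P Qc p"
proof -
  obtain k where k: "(F ^^ k) p \<in> G0" using assms by (auto simp: W_def)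
  then obtain z where z: "z \<in> ball 0 e0" "(F ^^ k) p = (z, f0 z)" by (auto simp: G0_def graph_on_def)
  have "fast_conv P Qc (z, f0 z)" using lchar[OF z(1) f0r[OF z(1)]] by simp
  then obtain \<rho> C where rc: "0 < \<rho>" "\<rho> < norm (poly (pderiv (Qc 0)) 0)"
      "\<And>n. norm ((F ^^ n) (z, f0 z)) \<le> C * \<rho> ^ n"
    unfolding fast_conv_def by blast
  have r1: "\<rho> < 1" using rc(2) bless1 by simp
  define M where "M = (\<Sum>n<k. norm ((F ^^ n) p))"
  have C0: "0 \<le> C" using rc(3)[of 0] by (metis norm_ge_zero order_trans mult.right_neutral power_0)
  have M0: "0 \<le> M" unfolding M_def by (simp add: sum_nonneg)
  define C' where "C' = (C + M) / \<rho> ^ k"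
  have "norm ((F ^^ n) p) \<le> C' * \<rho> ^ n" for n
  proof (cases "k \<le> n")
    case True
    have "(F ^^ n) p = (F ^^ (n - k)) ((F ^^ k) p)" using True by (metis F_iter_add le_add_diff_inverse2)
    then have "norm ((F ^^ n) p) \<le> C * \<rho> ^ (n - k)" using rc(3) z(2) by simp
    also have "\<dots> = C * \<rho> ^ n / \<rho> ^ k" using rc(1) True by (simp add: power_diff)
    also have "\<dots> \<le> C' * \<rho> ^ n" unfolding C'_def using M0 rc(1)
      by (simp add: divide_right_mono mult_right_mono)
    finally show ?thesis .
  next
    case False
    have "norm ((F ^^ n) p) \<le> M" unfolding M_def
      by (rule member_le_sum) (use False in auto)
    also have "\<dots> \<le> M * (\<rho> ^ n / \<rho> ^ k)"
    proof -
      have "\<rho> ^ k \<le> \<rho> ^ n" using False rc(1) r1 by (intro power_decreasing) auto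
      then have "1 \<le> \<rho> ^ n / \<rho> ^ k" using rc(1) by simp
      then show ?thesis using M0 by (metis mult.right_neutral mult_left_mono)
    qed
    also have "\<dots> \<le> C' * \<rho> ^ n" unfolding C'_def using C0 rc(1)
      by (simp add: divide_right_mono mult_right_mono field_simps)
    finally show ?thesis .
  qed
  then show ?thesis unfolding fast_conv_def using rc(1,2) by blast
qed

lemma P_contract: "\<exists>\<delta>>0. \<forall>z. norm z < \<delta> \<longrightarrow> norm (poly P z) \<le> ((1 + norm (poly (pderiv P) 0)) / 2) * norm z"
  by (rule deriv_contract[OF P0 poly_DERIV]) (use aless1 in auto)

lemma Q0_contract: "\<exists>\<delta>>0. \<forall>w. norm w < \<delta> \<longrightarrow> norm (poly (Qc 0) w) \<le> ((1 + norm (poly (pderiv (Qc 0)) 0)) / 2) * norm w"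
  by (rule deriv_contract[OF Q00 poly_DERIV]) (use bless1 in auto)

lemma Qdiff_bound: "\<exists>M\<ge>0. \<forall>z w. norm z \<le> 1 \<longrightarrow> norm w \<le> 1 \<longrightarrow>
    norm (Qval P Qc z w - poly (Qc 0) w) \<le> M * norm z"
proof -
  define M where "M = (\<Sum>j\<in>{1..degree P}. \<Sum>i\<le>degree (Qc j). norm (coeff (Qc j) i))"
  have "norm (Qval P Qc z w - poly (Qc 0) w) \<le> M * norm z" if "norm z \<le> 1" "norm w \<le> 1" for z w
  proof -
    have "norm (Qval P Qc z w - poly (Qc 0) w) = norm (\<Sum>j\<in>{1..degree P}. poly (Qc j) w * z ^ j)"
      by (simp add: Qval_split)
    also have "\<dots> \<le> (\<Sum>j\<in>{1..degree P}. norm (poly (Qc j) w * z ^ j))" by (rule norm_sum)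
    also have "\<dots> \<le> (\<Sum>j\<in>{1..degree P}. (\<Sum>i\<le>degree (Qc j). norm (coeff (Qc j) i)) * norm z)"
    proof (rule sum_mono)
      fix j assume j: "j \<in> {1..degree P}"
      have "norm (z ^ j) \<le> norm z"
        using j that(1) by (simp add: norm_power) (metis One_nat_def Suc_le_eq norm_ge_zero power_decreasing power_one_right)
      then show "norm (poly (Qc j) w * z ^ j) \<le> (\<Sum>i\<le>degree (Qc j). norm (coeff (Qc j) i)) * norm z"
        unfolding norm_mult by (intro mult_mono poly_bound_le1 that) (auto intro: sum_nonneg)
    qed
    finally show ?thesis by (simp add: M_def sum_distrib_right)
  qed
  moreover have "M \<ge> 0" unfolding M_def by (intro sum_nonneg) auto
  ultimately show ?thesis by blast
qed

lemma escape_bound: "\<exists>R0\<ge>1. \<forall>z w. norm z \<le> 1 \<longrightarrow> R0 \<le> norm w \<longrightarrow> 2 * norm w \<le> norm (Qval P Qc z w)"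
proof -
  define D where "D = degree P"
  obtain m where m: "D = Suc m" "m \<ge> 1"
  proof
    show "D = Suc (D - 1)" using d2 unfolding D_def by simp
    show "D - 1 \<ge> 1" using d2 unfolding D_def by simp
  qed
  define c where "c = coeff (Qc 0) D"
  have "Qc 0 \<noteq> 0" using degQ0 d2 by (metis degree_0 not_numeral_le_zero)
  then have c0: "c \<noteq> 0" unfolding c_def D_def using degQ0 by (metis leading_coeff_0_iff)
  define S1 where "S1 = (\<Sum>i\<le>m. norm (coeff (Qc 0) i))"
  define S2 where "S2 = (\<Sum>j\<in>{1..D}. \<Sum>i\<le>m. norm (coeff (Qc j) i))"
  define R0 where "R0 = max 1 ((S1 + S2 + 2) / norm c)"
  have key: "2 * norm w \<le> norm (Qval P Qc z w)" if z: "norm z \<le> 1" and w: "R0 \<le> norm w" for z w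
  proof -
    have w1: "1 \<le> norm w" using w unfolding R0_def by linarith
    have "poly (Qc 0) w = (\<Sum>i\<le>D. coeff (Qc 0) i * w ^ i)"
      by (rule poly_sum_le) (simp add: degQ0 D_def)
    also have "\<dots> = (\<Sum>i\<le>m. coeff (Qc 0) i * w ^ i) + c * w ^ D" by (simp add: m(1) c_def)
    finally have q0: "poly (Qc 0) w = (\<Sum>i\<le>m. coeff (Qc 0) i * w ^ i) + c * w ^ D" .
    have low: "(\<Sum>i\<le>m. coeff (Qc 0) i * w ^ i) = poly (\<Sum>i\<le>m. monom (coeff (Qc 0) i) i) w"
      by (simp add: poly_sum poly_monom)
    have b1: "norm (\<Sum>i\<le>m. coeff (Qc 0) i * w ^ i) \<le> S1 * norm w ^ m"
    proof -
      have "norm (\<Sum>i\<le>m. coeff (Qc 0) i * w ^ i) \<le> (\<Sum>i\<le>m. norm (coeff (Qc 0) i * w ^ i))" by (rule norm_sum)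
      also have "\<dots> \<le> (\<Sum>i\<le>m. norm (coeff (Qc 0) i) * norm w ^ m)"
        by (rule sum_mono) (auto simp: norm_mult norm_power intro!: mult_left_mono power_increasing w1)
      finally show ?thesis by (simp add: S1_def sum_distrib_right)
    qed
    have b2: "norm (\<Sum>j\<in>{1..D}. poly (Qc j) w * z ^ j) \<le> S2 * norm w ^ m"
    proof -
      have "norm (\<Sum>j\<in>{1..D}. poly (Qc j) w * z ^ j) \<le> (\<Sum>j\<in>{1..D}. norm (poly (Qc j) w * z ^ j))" by (rule norm_sum)
      also have "\<dots> \<le> (\<Sum>j\<in>{1..D}. (\<Sum>i\<le>m. norm (coeff (Qc j) i)) * norm w ^ m)"
      proof (rule sum_mono)
        fix j assume j: "j \<in> {1..D}"
        have dj: "degree (Qc j) \<le> m" using degQj[of j] j m(1) unfolding D_def by simp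
        have "norm (z ^ j) \<le> 1" using z by (simp add: norm_power power_le_one)
        then show "norm (poly (Qc j) w * z ^ j) \<le> (\<Sum>i\<le>m. norm (coeff (Qc j) i)) * norm w ^ m"
        proof -
          have "norm (poly (Qc j) w) * norm (z ^ j) \<le> norm (poly (Qc j) w) * 1"
            by (rule mult_left_mono) (use \<open>norm (z ^ j) \<le> 1\<close> in auto)
          then show ?thesis unfolding norm_mult using poly_bound_ge1[OF dj w1] by simp
        qed
      qed
      finally show ?thesis by (simp add: S2_def sum_distrib_right)
    qed
    have "Qval P Qc z w = c * w ^ D + ((\<Sum>i\<le>m. coeff (Qc 0) i * w ^ i) + (\<Sum>j\<in>{1..D}. poly (Qc j) w * z ^ j))"
      by (simp add: Qval_split q0 D_def)
    then have "norm (Qval P Qc z w) \<ge> norm (c * w ^ D) - norm ((\<Sum>i\<le>m. coeff (Qc 0) i * w ^ i) + (\<Sum>j\<in>{1..D}. poly (Qc j) w * z ^ j))"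
      by (metis norm_diff_ineq norm_minus_commute diff_minus_eq_add)
    moreover have "norm ((\<Sum>i\<le>m. coeff (Qc 0) i * w ^ i) + (\<Sum>j\<in>{1..D}. poly (Qc j) w * z ^ j)) \<le> (S1 + S2) * norm w ^ m"
      using b1 b2 norm_triangle_ineq[of "(\<Sum>i\<le>m. coeff (Qc 0) i * w ^ i)" "(\<Sum>j\<in>{1..D}. poly (Qc j) w * z ^ j)"]
      by (simp add: distrib_right)
    ultimately have "norm (Qval P Qc z w) \<ge> norm w ^ m * (norm c * norm w - (S1 + S2))"
      by (simp add: norm_mult norm_power m(1) algebra_simps)
    moreover have "norm c * norm w - (S1 + S2) \<ge> 2"
    proof -
      have "(S1 + S2 + 2) / norm c \<le> norm w" using w unfolding R0_def by linarith
      then show ?thesis using c0 by (simp add: divide_le_eq mult.commute)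
    qed
    moreover have "norm w ^ m \<ge> norm w" using w1 m(2)
      by (metis power_increasing power_one_right)
    ultimately show ?thesis
    proof -
      assume a1: "norm w ^ m * (norm c * norm w - (S1 + S2)) \<le> norm (Qval P Qc z w)"
        and a2: "2 \<le> norm c * norm w - (S1 + S2)" and a3: "norm w \<le> norm w ^ m"
      have "norm w ^ m * 2 \<le> norm w ^ m * (norm c * norm w - (S1 + S2))"
        by (rule mult_left_mono[OF a2]) simp
      then show ?thesis using a1 a3 by linarith
    qed
  qed
  have "R0 \<ge> 1" unfolding R0_def by simp
  then show ?thesis using key by blast
qed

end


context LA
begin

lemma Qval_tendsto: "(zs \<longlongrightarrow> z) F' \<Longrightarrow> (ws \<longlongrightarrow> w) F' \<Longrightarrow>
   ((\<lambda>x. Qval P Qc (zs x) (ws x)) \<longlongrightarrow> Qval P Qc z w) F'"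
  unfolding Qval_def by (intro tendsto_intros)

lemma Qw_tendsto: "(zs \<longlongrightarrow> z) F' \<Longrightarrow> (ws \<longlongrightarrow> w) F' \<Longrightarrow>
   ((\<lambda>x. Qw P Qc (zs x) (ws x)) \<longlongrightarrow> Qw P Qc z w) F'"
  unfolding Qw_def by (intro tendsto_intros)

lemma Piter_tendsto: "(zs \<longlongrightarrow> z) F' \<Longrightarrow> ((\<lambda>x. (poly P ^^ n) (zs x)) \<longlongrightarrow> (poly P ^^ n) z) F'"
  by (induction n) (auto intro: tendsto_poly)

lemma s_tendsto: "(zs \<longlongrightarrow> z) F' \<Longrightarrow> (ws \<longlongrightarrow> w) F' \<Longrightarrow>
   ((\<lambda>x. s n (zs x) (ws x)) \<longlongrightarrow> s n z w) F'"
  by (induction n) (auto intro: Qval_tendsto Piter_tendsto)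

lemma Pshrink: "\<exists>\<delta>>0. \<forall>z. norm z < \<delta> \<longrightarrow> norm (poly P z) \<le> norm z"
proof -
  obtain \<delta> where d: "\<delta> > 0" "\<forall>z. norm z < \<delta> \<longrightarrow> norm (poly P z) \<le> ((1 + norm (poly (pderiv P) 0)) / 2) * norm z"
    using P_contract by blast
  have "((1 + norm (poly (pderiv P) 0)) / 2) \<le> 1" using aless1 by simp
  then have "norm (poly P z) \<le> norm z" if "norm z < \<delta>" for z
    using d(2) that by (meson mult_left_le_one_le norm_ge_zero order_trans zero_le_divide_iff add_nonneg_nonneg zero_le_one zero_le_numeral)
  then show ?thesis using d(1) by blast
qed

lemma inv_bidisc: "\<exists>\<delta> \<eta>. 0 < \<delta> \<and> 0 < \<eta> \<and> \<delta> \<le> e0 \<and> \<eta> \<le> r \<and>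
   (\<forall>z w. norm z < \<delta> \<longrightarrow> norm w < \<eta> \<longrightarrow> norm (poly P z) < \<delta> \<and> norm (Qval P Qc z w) < \<eta>)"
proof -
  define \<beta> where "\<beta> = (1 + norm (poly (pderiv (Qc 0)) 0)) / 2"
  have b1: "\<beta> < 1" "0 < \<beta>" using bless1 unfolding \<beta>_def by (auto simp: add_pos_nonneg)
  obtain \<delta>Q where dQ: "\<delta>Q > 0" "\<forall>w. norm w < \<delta>Q \<longrightarrow> norm (poly (Qc 0) w) \<le> \<beta> * norm w"
    using Q0_contract unfolding \<beta>_def by blast
  obtain \<delta>P where dP: "\<delta>P > 0" "\<forall>z. norm z < \<delta>P \<longrightarrow> norm (poly P z) \<le> norm z"
    using Pshrink by blast
  obtain M where M: "M \<ge> 0" "\<forall>z w. norm z \<le> 1 \<longrightarrow> norm w \<le> 1 \<longrightarrow> norm (Qval P Qc z w - poly (Qc 0) w) \<le> M * norm z"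
    using Qdiff_bound by blast
  define \<eta> where "\<eta> = min (min \<delta>Q r) 1 / 2"
  define \<delta> where "\<delta> = min (min \<delta>P e0) (min 1 ((1 - \<beta>) * \<eta> / (M + 1)))"
  have \<eta>pos: "0 < \<eta>" "\<eta> \<le> r" "\<eta> < \<delta>Q" "\<eta> \<le> 1" unfolding \<eta>_def using dQ rpos by auto
  have \<delta>pos: "0 < \<delta>" unfolding \<delta>_def using dP e0pos b1 \<eta>pos M by auto
  have key: "norm (poly P z) < \<delta> \<and> norm (Qval P Qc z w) < \<eta>" if z: "norm z < \<delta>" and w: "norm w < \<eta>" for z w
  proof
    show "norm (poly P z) < \<delta>" using dP(2) z unfolding \<delta>_def by force
    have z1: "norm z \<le> 1" using z unfolding \<delta>_def by linarith
    have "norm (Qval P Qc z w) \<le> norm (poly (Qc 0) w) + norm (Qval P Qc z w - poly (Qc 0) w)"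
      by (metis add.commute diff_add_cancel norm_triangle_ineq)
    also have "\<dots> \<le> \<beta> * norm w + M * norm z"
      using dQ(2) M(2) z1 w \<eta>pos by (intro add_mono) auto
    also have "\<dots> < \<beta> * \<eta> + (1 - \<beta>) * \<eta>"
    proof (rule add_less_le_mono)
      show "\<beta> * norm w < \<beta> * \<eta>" using b1 w by simp
      have "norm z \<le> (1 - \<beta>) * \<eta> / (M + 1)" using z unfolding \<delta>_def by linarith
      then have "M * norm z \<le> M * ((1 - \<beta>) * \<eta> / (M + 1))" by (rule mult_left_mono[OF _ M(1)])
      also have "\<dots> \<le> (1 - \<beta>) * \<eta>"
      proof -
        have "M / (M + 1) \<le> 1" using M(1) by simp
        moreover have "0 \<le> (1 - \<beta>) * \<eta>" using b1 \<eta>pos by simp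
        ultimately have "(M / (M + 1)) * ((1 - \<beta>) * \<eta>) \<le> 1 * ((1 - \<beta>) * \<eta>)"
          by (rule mult_right_mono)
        then show ?thesis by (simp add: field_simps)
      qed
      finally show "M * norm z \<le> (1 - \<beta>) * \<eta>" .
    qed
    also have "\<dots> = \<eta>" by (simp add: algebra_simps)
    finally show "norm (Qval P Qc z w) < \<eta>" .
  qed
  have "\<delta> \<le> e0" unfolding \<delta>_def by linarith
  then show ?thesis using key \<delta>pos \<eta>pos by blast
qed

end


context LA
begin

lemma binv_orbit:
  assumes inv: "\<forall>z w. norm z < \<delta> \<longrightarrow> norm w < \<eta> \<longrightarrow> norm (poly P z) < \<delta> \<and> norm (Qval P Qc z w) < \<eta>"
    and z: "norm z < \<delta>" and w: "norm w < \<eta>"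
  shows "norm ((poly P ^^ n) z) < \<delta> \<and> norm (s n z w) < \<eta>"
  by (induction n) (use inv z w in auto)

lemma on_graph:
  assumes inv: "\<forall>z w. norm z < \<delta> \<longrightarrow> norm w < \<eta> \<longrightarrow> norm (poly P z) < \<delta> \<and> norm (Qval P Qc z w) < \<eta>"
    and de: "\<delta> \<le> e0" "\<eta> \<le> r"
    and W: "(z, w) \<in> W" and z: "norm z < \<delta>" and w: "norm w < \<eta>"
  shows "w = f0 z"
proof -
  have orb: "(F ^^ n) (z, w) \<in> ball 0 e0 \<times> ball 0 r" for n
    using binv_orbit[OF inv z w, of n] de unfolding F_iter by auto
  have "z \<in> ball 0 e0" "w \<in> ball 0 r" using z w de by auto
  from lchar[OF this] show ?thesis using orb fast_conv_W[OF W] by blast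
qed

lemma escape_orbit:
  assumes R0: "\<forall>z w. norm z \<le> 1 \<longrightarrow> R0 \<le> norm w \<longrightarrow> 2 * norm w \<le> norm (Qval P Qc z w)"
    and zi: "\<forall>n. norm ((poly P ^^ n) z) \<le> 1" and u: "R0 \<le> norm u" "0 \<le> R0"
  shows "norm u \<le> norm (s n z u)"
proof (induction n)
  case (Suc n)
  have "2 * norm (s n z u) \<le> norm (s (Suc n) z u)"
    using R0 zi Suc u by simp
  have "norm u \<le> norm (s n z u)" using Suc .
  with \<open>2 * norm (s n z u) \<le> norm (s (Suc n) z u)\<close> norm_ge_zero[of "s n z u"]
  show ?case by linarith
qed simp

lemma good_eps: "\<exists>\<epsilon> R. 0 < \<epsilon> \<and> \<epsilon> \<le> 1 \<and> \<epsilon> \<le> e0 \<and> (\<forall>z. norm z < \<epsilon> \<longrightarrow> norm (poly P z) < \<epsilon>) \<and>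
   (\<forall>z u. norm z < \<epsilon> \<longrightarrow> (z, u) \<in> W \<longrightarrow> Qw P Qc z u \<noteq> 0 \<and> norm u < R)"
proof -
  obtain \<delta>P where dP: "\<delta>P > 0" "\<forall>z. norm z < \<delta>P \<longrightarrow> norm (poly P z) \<le> norm z"
    using Pshrink by blast
  define \<delta>1 where "\<delta>1 = min (min \<delta>P 1) e0"
  have d1: "0 < \<delta>1" "\<delta>1 \<le> 1" "\<delta>1 \<le> e0" "\<delta>1 \<le> \<delta>P" unfolding \<delta>1_def using dP e0pos by auto
  have iter: "norm ((poly P ^^ n) z) \<le> norm z" if "norm z < \<delta>1" for z n
  proof (induction n)
    case (Suc n)
    have "norm ((poly P ^^ n) z) < \<delta>P" using Suc that d1 by linarith
    then have "norm (poly P ((poly P ^^ n) z)) \<le> norm ((poly P ^^ n) z)" using dP(2) by blast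
    then show ?case using Suc by simp
  qed simp
  obtain R0 where R0: "R0 \<ge> 1" "\<forall>z w. norm z \<le> 1 \<longrightarrow> R0 \<le> norm w \<longrightarrow> 2 * norm w \<le> norm (Qval P Qc z w)"
    using escape_bound by blast
  define R where "R = max R0 r"
  have Wb: "norm u < R" if z: "norm z < \<delta>1" and W: "(z, u) \<in> W" for z u
  proof (rule ccontr)
    assume "\<not> norm u < R"
    then have u: "R0 \<le> norm u" "r \<le> norm u" unfolding R_def by auto
    have zi: "\<forall>n. norm ((poly P ^^ n) z) \<le> 1" 
    proof
      fix n show "norm ((poly P ^^ n) z) \<le> 1" using iter[OF z, of n] z d1 by linarith
    qed
    obtain k where "(F ^^ k) (z, u) \<in> G0" using W by (auto simp: W_def)
    then obtain x where x: "x \<in> ball 0 e0" "s k z u = f0 x" by (auto simp: G0_def graph_on_def F_iter)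
    have "norm (s k z u) < r" using f0r[OF x(1)] x(2) by simp
    moreover have "norm u \<le> norm (s k z u)" using escape_orbit[OF R0(2) zi u(1)] R0(1) by simp
    ultimately show False using u by simp
  qed
  obtain \<delta> \<eta> where inv: "0 < \<delta>" "0 < \<eta>" "\<delta> \<le> e0" "\<eta> \<le> r"
      "\<forall>z w. norm z < \<delta> \<longrightarrow> norm w < \<eta> \<longrightarrow> norm (poly P z) < \<delta> \<and> norm (Qval P Qc z w) < \<eta>"
    using inv_bidisc by blast
  have "\<exists>\<epsilon>>0. \<epsilon> \<le> \<delta>1 \<and> (\<forall>z u. norm z < \<epsilon> \<longrightarrow> (z, u) \<in> W \<longrightarrow> Qw P Qc z u \<noteq> 0)"
  proof (rule ccontr)
    assume H: "\<not> ?thesis"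
    have "\<forall>m::nat. \<exists>p. norm (fst p) < \<delta>1 * inverse (real (Suc m)) \<and> p \<in> W \<and> Qw P Qc (fst p) (snd p) = 0"
    proof
      fix m :: nat
      have "0 < \<delta>1 * inverse (real (Suc m))" "\<delta>1 * inverse (real (Suc m)) \<le> \<delta>1"
        using d1 by (auto simp: field_simps)
      then show "\<exists>p. norm (fst p) < \<delta>1 * inverse (real (Suc m)) \<and> p \<in> W \<and> Qw P Qc (fst p) (snd p) = 0"
        using H by force
    qed
    then obtain ps where ps: "\<And>m. norm (fst (ps m)) < \<delta>1 * inverse (real (Suc m))"
        "\<And>m. ps m \<in> W" "\<And>m. Qw P Qc (fst (ps m)) (snd (ps m)) = 0"
      by metis
    define zs where "zs m = fst (ps m)" for m
    define us where "us m = snd (ps m)" for m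
    have psm: "ps m = (zs m, us m)" for m by (simp add: zs_def us_def)
    have zsd: "norm (zs m) < \<delta>1" for m
    proof -
      have "\<delta>1 * inverse (real (Suc m)) \<le> \<delta>1" using d1 by (auto simp: field_simps)
      then show ?thesis using ps(1)[of m] unfolding zs_def by linarith
    qed
    have usb: "us m \<in> cball 0 R" for m
      using Wb[OF zsd, of m "us m"] ps(2)[of m] psm[of m] by (simp add: less_imp_le)
    have "\<forall>n. us n \<in> cball 0 R" using usb by blast
    from seq_compactE[OF compact_imp_seq_compact[OF compact_cball] this]
    obtain c \<rho> where c: "c \<in> cball 0 R" "strict_mono \<rho>" "(us \<circ> \<rho>) \<longlonglongrightarrow> c" .
    have zr: "(\<lambda>m. zs (\<rho> m)) \<longlonglongrightarrow> 0"
    proof (rule Lim_null_comparison)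
      show "\<forall>\<^sub>F m in sequentially. norm (zs (\<rho> m)) \<le> \<delta>1 * inverse (real (Suc m))"
      proof (rule always_eventually, rule allI)
        fix m
        have "m \<le> \<rho> m" using seq_suble[OF c(2)] by simp
        then have "inverse (real (Suc (\<rho> m))) \<le> inverse (real (Suc m))" by (simp add: le_imp_inverse_le)
        then have "\<delta>1 * inverse (real (Suc (\<rho> m))) \<le> \<delta>1 * inverse (real (Suc m))"
          using d1 by (simp add: mult_left_mono)
        then show "norm (zs (\<rho> m)) \<le> \<delta>1 * inverse (real (Suc m))"
          using ps(1)[of "\<rho> m"] unfolding zs_def by linarith
      qed
      show "(\<lambda>m. \<delta>1 * inverse (real (Suc m))) \<longlonglongrightarrow> 0"
        using tendsto_mult_right_zero[OF LIMSEQ_inverse_real_of_nat] by simp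
    qed
    have ur: "(\<lambda>m. us (\<rho> m)) \<longlonglongrightarrow> c" using c(3) by (simp add: o_def)
    have "(\<lambda>m. Qw P Qc (zs (\<rho> m)) (us (\<rho> m))) \<longlonglongrightarrow> Qw P Qc 0 c"
      by (rule Qw_tendsto[OF zr ur])
    moreover have "(\<lambda>m. Qw P Qc (zs (\<rho> m)) (us (\<rho> m))) = (\<lambda>m. 0)"
      using ps(3) unfolding zs_def us_def by simp
    ultimately have Qwc: "Qw P Qc 0 c = 0" using LIMSEQ_unique tendsto_const by metis
    have Wm: "(F ^^ N) (zs (\<rho> m), us (\<rho> m)) \<in> W" for N m
      using W_fwd ps(2) psm by metis
    have zq: "(\<lambda>m. (poly P ^^ N) (zs (\<rho> m))) \<longlonglongrightarrow> 0" for N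
      using Piter_tendsto[OF zr, of N] by (simp add: Piter0)
    have uq: "(\<lambda>m. s N (zs (\<rho> m)) (us (\<rho> m))) \<longlonglongrightarrow> s N 0 c" for N
      by (rule s_tendsto[OF zr ur])
    show False
    proof (cases "c \<in> slice (basinF P Qc) 0")
      case True
      have conv: "(\<lambda>n. (F ^^ n) (0, c)) \<longlonglongrightarrow> (0, 0)"
        using True by (simp add: slice_def basinF_def)
      have "\<forall>\<^sub>F n in sequentially. dist ((F ^^ n) (0, c)) (0, 0) < min \<delta> \<eta>"
        using tendstoD[OF conv, of "min \<delta> \<eta>"] inv(1,2) by linarith
      then obtain N0 where N0: "\<And>n. n \<ge> N0 \<Longrightarrow> dist ((F ^^ n) (0, c)) (0, 0) < min \<delta> \<eta>"
        unfolding eventually_sequentially by blast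
      define N where "N = Suc N0"
      have FN: "(F ^^ N) (0, c) = (0, s N 0 c)" by (simp add: F_iter Piter0)
      have "norm (s N 0 c) \<le> norm ((F ^^ N) (0, c))" unfolding FN by (simp add: norm_Pair)
      also have "\<dots> < min \<delta> \<eta>"
      proof -
        have "dist ((F ^^ N) (0, c)) (0, 0) < min \<delta> \<eta>" using N0[of N] unfolding N_def by simp
        moreover have "(0::complex, 0::complex) = 0" by (simp add: zero_prod_def)
        ultimately show ?thesis by (metis dist_0_norm dist_commute)
      qed
      finally have wsmall: "norm (s N 0 c) < \<eta>" by simp
      have wnz: "s N 0 c \<noteq> 0" using C3[OF True Qwc, of N] FN unfolding N_def by auto
      have ev1: "\<forall>\<^sub>F m in sequentially. norm ((poly P ^^ N) (zs (\<rho> m))) < \<delta>"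
        using tendstoD[OF zq[of N], of \<delta>] inv by (simp add: dist_norm)
      have ev2: "\<forall>\<^sub>F m in sequentially. norm (s N (zs (\<rho> m)) (us (\<rho> m))) < \<eta>"
      proof -
        have "\<forall>\<^sub>F m in sequentially. dist (s N (zs (\<rho> m)) (us (\<rho> m))) (s N 0 c) < \<eta> - norm (s N 0 c)"
          using tendstoD[OF uq[of N]] wsmall by simp
        then show ?thesis
          by eventually_elim (metis dist_norm norm_triangle_sub add.commute less_diff_eq order_le_less_trans)
      qed
      have ev3: "\<forall>\<^sub>F m in sequentially. s N (zs (\<rho> m)) (us (\<rho> m)) = f0 ((poly P ^^ N) (zs (\<rho> m)))"
        using ev1 ev2
      proof eventually_elim
        case (elim m)
        show ?case
          by (rule on_graph[OF inv(5) inv(3) inv(4) _ elim(1) elim(2)]) (use Wm[of N m] in \<open>simp add: F_iter\<close>)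
      qed
      have "isCont f0 0"
        using continuous_on_eq_continuous_at[OF open_ball, of 0 e0 f0] holomorphic_on_imp_continuous_on[OF f0hol] e0pos
        by simp
      then have "(\<lambda>m. f0 ((poly P ^^ N) (zs (\<rho> m)))) \<longlonglongrightarrow> f0 0"
        using isCont_tendsto_compose zq by blast
      then have "(\<lambda>m. s N (zs (\<rho> m)) (us (\<rho> m))) \<longlonglongrightarrow> 0"
        using Lim_transform_eventually[OF _ eventually_mono[OF ev3]] f00 by (metis (no_types, lifting))
      then have "s N 0 c = 0" using uq LIMSEQ_unique by blast
      then show False using wnz by simp
    next
      case False
      have "filterlim (\<lambda>n. (poly (Qc 0) ^^ n) c) at_infinity sequentially"
        using C2[OF False Qwc] .
      then have "filterlim (\<lambda>n. norm ((poly (Qc 0) ^^ n) c)) at_top sequentially"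
        by (rule filterlim_at_infinity_imp_norm_at_top)
      then have "\<forall>\<^sub>F n in sequentially. R + 1 \<le> norm ((poly (Qc 0) ^^ n) c)"
        by (simp add: filterlim_at_top)
      then obtain N where N: "R + 1 \<le> norm (s N 0 c)"
        unfolding eventually_sequentially s_zero by blast
      have ev: "\<forall>\<^sub>F m in sequentially. dist (s N (zs (\<rho> m)) (us (\<rho> m))) (s N 0 c) < 1"
        using tendstoD[OF uq[of N]] by simp
      then obtain M where "\<forall>n\<ge>M. dist (s N (zs (\<rho> n)) (us (\<rho> n))) (s N 0 c) < 1"
        unfolding eventually_sequentially by blast
      then have m: "dist (s N (zs (\<rho> M)) (us (\<rho> M))) (s N 0 c) < 1" by simp
      have "R < norm (s N (zs (\<rho> M)) (us (\<rho> M)))"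
      proof -
        have "norm (s N 0 c) \<le> norm (s N (zs (\<rho> M)) (us (\<rho> M))) + norm (s N 0 c - s N (zs (\<rho> M)) (us (\<rho> M)))"
          by (rule norm_triangle_sub)
        moreover have "norm (s N 0 c - s N (zs (\<rho> M)) (us (\<rho> M))) < 1"
          using m by (simp add: dist_norm norm_minus_commute)
        ultimately show ?thesis using N by linarith
      qed
      moreover have "norm (s N (zs (\<rho> M)) (us (\<rho> M))) < R"
      proof (rule Wb)
        show "norm ((poly P ^^ N) (zs (\<rho> M))) < \<delta>1" using iter[OF zsd] zsd by (meson le_less_trans)
        show "((poly P ^^ N) (zs (\<rho> M)), s N (zs (\<rho> M)) (us (\<rho> M))) \<in> W"
          using Wm[of N M] by (simp add: F_iter)
      qed
      ultimately show False by simp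
    qed
  qed
  then obtain \<epsilon> where e: "\<epsilon> > 0" "\<epsilon> \<le> \<delta>1" "\<And>z u. norm z < \<epsilon> \<Longrightarrow> (z, u) \<in> W \<Longrightarrow> Qw P Qc z u \<noteq> 0"
    by blast
  have X1: "norm (poly P z) < \<epsilon>" if "norm z < \<epsilon>" for z
  proof -
    have "norm z < \<delta>P" using that e d1 by linarith
    then have "norm (poly P z) \<le> norm z" using dP(2) by blast
    then show ?thesis using that by linarith
  qed
  have X2: "norm u < R" if "norm z < \<epsilon>" "(z, u) \<in> W" for z u
  proof -
    have "norm z < \<delta>1" using that(1) e(2) by linarith
    then show ?thesis using Wb that(2) by blast
  qed
  have X3: "\<epsilon> \<le> 1" "\<epsilon> \<le> e0" using e(2) d1 by linarith+
  show ?thesis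
    apply (rule exI[of _ \<epsilon>], rule exI[of _ R], intro conjI allI impI)
    using e(1,3) X1 X2 X3 by auto
qed

end


lemma poly_hasd: "((\<lambda>q. poly p (snd q)) has_derivative (\<lambda>h. poly (pderiv p) (snd q) * snd h)) (at (q :: complex \<times> complex))"
proof -
  have "(poly p has_derivative (*) (poly (pderiv p) (snd q))) (at (snd q))"
    using poly_DERIV[of p "snd q"] by (simp add: has_field_derivative_def)
  from has_derivative_compose[OF has_derivative_snd[OF has_derivative_ident] this]
  show ?thesis by simp
qed

context LA
begin

definition AQ where "AQ z w = (\<Sum>j\<le>degree P. poly (Qc j) w * (of_nat j * z ^ (j - 1)))"

lemma AQ_tendsto: "(zs \<longlongrightarrow> z) F' \<Longrightarrow> (ws \<longlongrightarrow> w) F' \<Longrightarrow>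
   ((\<lambda>x. AQ (zs x) (ws x)) \<longlongrightarrow> AQ z w) F'"
  unfolding AQ_def by (intro tendsto_intros)

lemma Qval_hasd: "((\<lambda>q. Qval P Qc (fst q) (snd q)) has_derivative
    (\<lambda>h. AQ (fst q) (snd q) * fst h + Qw P Qc (fst q) (snd q) * snd h)) (at q)"
proof -
  have t: "((\<lambda>x. poly (Qc j) (snd x) * fst x ^ j) has_derivative
      (\<lambda>h. poly (Qc j) (snd q) * (of_nat j * fst h * fst q ^ (j - 1)) + poly (pderiv (Qc j)) (snd q) * snd h * fst q ^ j)) (at q)" for j
    using has_derivative_mult[OF poly_hasd[of "Qc j" q] has_derivative_power[OF has_derivative_fst[OF has_derivative_ident], of j]]
    by simp
  have "((\<lambda>q. \<Sum>j\<le>degree P. poly (Qc j) (snd q) * fst q ^ j) has_derivative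
      (\<lambda>h. \<Sum>j\<le>degree P. poly (Qc j) (snd q) * (of_nat j * fst h * fst q ^ (j - 1)) + poly (pderiv (Qc j)) (snd q) * snd h * fst q ^ j)) (at q)"
    by (rule has_derivative_sum) (rule t)
  then show ?thesis unfolding Qval_def
  proof (rule has_derivative_eq_rhs)
    show "(\<lambda>h. \<Sum>j\<le>degree P. poly (Qc j) (snd q) * (of_nat j * fst h * fst q ^ (j - 1)) + poly (pderiv (Qc j)) (snd q) * snd h * fst q ^ j) =
      (\<lambda>h. AQ (fst q) (snd q) * fst h + Qw P Qc (fst q) (snd q) * snd h)"
      unfolding AQ_def Qw_def by (auto simp: fun_eq_iff sum.distrib sum_distrib_left sum_distrib_right algebra_simps)
  qed
qed

lemma Piter_deriv: "\<exists>D. (\<forall>z. isCont D z) \<and> (\<forall>z. ((poly P ^^ n) has_field_derivative D z) (at z))"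
proof (induction n)
  case 0
  show ?case by (rule exI[of _ "\<lambda>z. 1"]) (auto intro: DERIV_ident)
next
  case (Suc n)
  then obtain D where D: "\<And>z. isCont D z" "\<And>z. ((poly P ^^ n) has_field_derivative D z) (at z)" by blast
  have c: "isCont (poly P ^^ n) z" for z using D(2) DERIV_isCont by blast
  define D' where "D' z = poly (pderiv P) ((poly P ^^ n) z) * D z" for z
  have "((poly P ^^ Suc n) has_field_derivative D' z) (at z)" for z
    unfolding D'_def using DERIV_chain[OF poly_DERIV D(2)] by (simp add: o_def)
  moreover have "isCont D' z" for z
    unfolding D'_def using c D(1) by (intro continuous_intros continuous_poly) auto
  ultimately show ?case by blast
qed

definition Bd where "Bd n p = (\<Prod>j<n. Qw P Qc ((poly P ^^ j) (fst p)) (s j (fst p) (snd p)))"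

lemma Bd_cont: "isCont (Bd n) p"
  unfolding isCont_def Bd_def
  by (intro tendsto_prod Qw_tendsto Piter_tendsto s_tendsto tendsto_fst tendsto_snd tendsto_ident_at)

lemma s_hasd: "\<exists>A. (\<forall>p. isCont A p) \<and> (\<forall>p. ((\<lambda>p. s n (fst p) (snd p)) has_derivative (\<lambda>h. A p * fst h + Bd n p * snd h)) (at p))"
proof (induction n)
  case 0
  show ?case
    by (rule exI[of _ "\<lambda>p. 0"]) (auto simp: Bd_def intro: has_derivative_snd[OF has_derivative_ident])
next
  case (Suc n)
  then obtain A where A: "\<And>p. isCont A p" "\<And>p. ((\<lambda>p. s n (fst p) (snd p)) has_derivative (\<lambda>h. A p * fst h + Bd n p * snd h)) (at p)" by blast
  obtain D where D: "\<And>z. isCont D z" "\<And>z. ((poly P ^^ n) has_field_derivative D z) (at z)"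
    using Piter_deriv by blast
  define \<psi> where "\<psi> p = ((poly P ^^ n) (fst p), s n (fst p) (snd p))" for p
  have \<psi>d: "(\<psi> has_derivative (\<lambda>h. (D (fst p) * fst h, A p * fst h + Bd n p * snd h))) (at p)" for p
  proof -
    have "((poly P ^^ n) has_derivative (*) (D (fst p))) (at (fst p))"
      using D(2) by (simp add: has_field_derivative_def)
    from has_derivative_compose[OF has_derivative_fst[OF has_derivative_ident] this]
    have "((\<lambda>p. (poly P ^^ n) (fst p)) has_derivative (\<lambda>h. D (fst p) * fst h)) (at p)" by simp
    from has_derivative_Pair[OF this A(2)] show ?thesis unfolding \<psi>_def by simp
  qed
  define A' where "A' p = AQ (fst (\<psi> p)) (snd (\<psi> p)) * D (fst p) + Qw P Qc (fst (\<psi> p)) (snd (\<psi> p)) * A p" for p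
  have "((\<lambda>p. s (Suc n) (fst p) (snd p)) has_derivative (\<lambda>h. A' p * fst h + Bd (Suc n) p * snd h)) (at p)" for p
  proof -
    from has_derivative_compose[OF \<psi>d Qval_hasd[of "\<psi> p"]]
    have hd: "((\<lambda>p. Qval P Qc (fst (\<psi> p)) (snd (\<psi> p))) has_derivative
      (\<lambda>h. AQ (fst (\<psi> p)) (snd (\<psi> p)) * (D (fst p) * fst h) + Qw P Qc (fst (\<psi> p)) (snd (\<psi> p)) * (A p * fst h + Bd n p * snd h))) (at p)"
      by simp
    have eqf: "(\<lambda>p. s (Suc n) (fst p) (snd p)) = (\<lambda>p. Qval P Qc (fst (\<psi> p)) (snd (\<psi> p)))"
      by (simp add: \<psi>_def fun_eq_iff)
    show ?thesis
      unfolding eqf by (rule has_derivative_eq_rhs[OF hd]) (simp add: fun_eq_iff A'_def Bd_def algebra_simps \<psi>_def)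
  qed
  moreover have "isCont A' p" for p
  proof -
    have t1: "((\<lambda>x. fst x) \<longlongrightarrow> fst p) (at p)" "((\<lambda>x. snd x) \<longlongrightarrow> snd p) (at p)"
      by (auto intro: tendsto_fst tendsto_snd tendsto_ident_at)
    have "isCont (\<lambda>p. AQ (fst (\<psi> p)) (snd (\<psi> p))) p" "isCont (\<lambda>p. Qw P Qc (fst (\<psi> p)) (snd (\<psi> p))) p"
      unfolding isCont_def \<psi>_def fst_conv snd_conv
      by (intro AQ_tendsto Qw_tendsto Piter_tendsto s_tendsto t1)+
    moreover have "isCont (\<lambda>p. D (fst p)) p" using D(1) by (auto intro: isCont_o2[OF isCont_fst])
    ultimately show ?thesis unfolding A'_def using A(1) by (intro continuous_intros) auto
  qed
  ultimately show ?case by blast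
qed

end


lemma bl_aux: "bounded_linear (\<lambda>h::complex \<times> complex. (fst h, a * fst h + b * snd h))"
  by (intro bounded_linear_Pair bounded_linear_add bounded_linear_fst
      bounded_linear_compose[OF bounded_linear_mult_right bounded_linear_fst]
      bounded_linear_compose[OF bounded_linear_mult_right bounded_linear_snd])

lemma bl_aux2: "bounded_linear (\<lambda>h::complex \<times> complex. (fst h, (snd h - a * fst h) / b))"
proof -
  have "bounded_linear (\<lambda>h::complex \<times> complex. snd h - a * fst h)"
    by (intro bounded_linear_sub bounded_linear_snd
      bounded_linear_compose[OF bounded_linear_mult_right bounded_linear_fst])
  from bounded_linear_compose[OF bounded_linear_divide this]
  have "bounded_linear (\<lambda>h::complex \<times> complex. (snd h - a * fst h) / b)" .
  then show ?thesis by (intro bounded_linear_Pair bounded_linear_fst)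
qed

lemma dist_pair_lt: fixes z z0 u u0 :: complex shows "dist z z0 < e / 2 \<Longrightarrow> dist u u0 < e / 2 \<Longrightarrow> dist (z, u) (z0, u0) < (e::real)"
proof -
  assume a: "dist z z0 < e / 2" "dist u u0 < e / 2"
  have "dist (z, u) (z0, u0) = norm (z - z0, u - u0)" by (simp add: dist_norm)
  also have "\<dots> \<le> norm (z - z0) + norm (u - u0)" by (rule norm_Pair_le)
  also have "\<dots> < e" using a by (simp add: dist_norm)
  finally show ?thesis .
qed

locale LB = LA +
  fixes \<epsilon> R :: real
  assumes eps: "0 < \<epsilon>" "\<epsilon> \<le> 1" "\<epsilon> \<le> e0"
    and Pinv: "\<And>z. norm z < \<epsilon> \<Longrightarrow> norm (poly P z) < \<epsilon>"
    and Wgood: "\<And>z u. norm z < \<epsilon> \<Longrightarrow> (z, u) \<in> W \<Longrightarrow> Qw P Qc z u \<noteq> 0 \<and> norm u < R"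
begin

definition "Z K = {p. fst p \<in> ball 0 \<epsilon> \<and> (F ^^ K) p \<in> G0}"
definition "G K p = s K (fst p) (snd p) - f0 ((poly P ^^ K) (fst p))"
definition "SS = ball (0::complex) \<epsilon> \<times> (UNIV :: complex set)"

lemma open_SS: "open SS" unfolding SS_def by (intro open_Times open_ball open_UNIV)

lemma Piter_ball: "z \<in> ball 0 \<epsilon> \<Longrightarrow> (poly P ^^ n) z \<in> ball 0 \<epsilon>"
  by (induction n) (auto intro: Pinv)

lemma Z_iff: "z \<in> ball 0 \<epsilon> \<Longrightarrow> ((z, u) \<in> Z K \<longleftrightarrow> G K (z, u) = 0)"
proof -
  assume z: "z \<in> ball 0 \<epsilon>"
  have pz: "(poly P ^^ K) z \<in> ball 0 e0" using Piter_ball[OF z, of K] eps by auto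
  have "(z, u) \<in> Z K \<longleftrightarrow> ((poly P ^^ K) z, s K z u) \<in> graph_on e0 f0"
    using z by (simp add: Z_def F_iter G0_def)
  also have "\<dots> \<longleftrightarrow> s K z u = f0 ((poly P ^^ K) z)"
    using pz by (auto simp: graph_on_def)
  finally show ?thesis by (simp add: G_def)
qed

lemma Z_W: "p \<in> Z K \<Longrightarrow> p \<in> W"
  by (auto simp: Z_def W_def)

lemma Z_fst: "p \<in> Z K \<Longrightarrow> fst p \<in> ball 0 \<epsilon>"
  by (auto simp: Z_def)

lemma Z_bound: "p \<in> Z K \<Longrightarrow> norm (snd p) < R"
  using Wgood[of "fst p" "snd p"] Z_W[of p K] Z_fst[of p K] by auto

lemma Z_mono: "K \<le> K' \<Longrightarrow> Z K \<subseteq> Z K'"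
  by (auto simp: Z_def intro: W_later)

lemma Bd_nz: "p \<in> Z K \<Longrightarrow> Bd K p \<noteq> 0"
proof -
  assume p: "p \<in> Z K"
  have "Qw P Qc ((poly P ^^ j) (fst p)) (s j (fst p) (snd p)) \<noteq> 0" for j
  proof -
    have "(F ^^ j) p \<in> W" using W_fwd Z_W[OF p] by blast
    then have "((poly P ^^ j) (fst p), s j (fst p) (snd p)) \<in> W"
      by (metis F_iter prod.collapse)
    moreover have "norm ((poly P ^^ j) (fst p)) < \<epsilon>" using Piter_ball[OF Z_fst[OF p]] by simp
    ultimately show ?thesis using Wgood by blast
  qed
  then show ?thesis unfolding Bd_def by (simp add: prod_zero_iff)
qed

lemma G_hasd: "\<exists>A. (\<forall>p\<in>SS. isCont A p) \<and> (\<forall>p\<in>SS. (G K has_derivative (\<lambda>h. A p * fst h + Bd K p * snd h)) (at p))"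
proof -
  obtain As where As: "\<And>p. isCont As p" "\<And>p. ((\<lambda>p. s K (fst p) (snd p)) has_derivative (\<lambda>h. As p * fst h + Bd K p * snd h)) (at p)"
    using s_hasd by blast
  obtain D where D: "\<And>z. isCont D z" "\<And>z. ((poly P ^^ K) has_field_derivative D z) (at z)"
    using Piter_deriv by blast
  define A where "A p = As p - deriv f0 ((poly P ^^ K) (fst p)) * D (fst p)" for p
  have pk: "(poly P ^^ K) (fst p) \<in> ball 0 e0" if "p \<in> SS" for p
    using Piter_ball[of "fst p" K] that eps by (auto simp: SS_def)
  have "(G K has_derivative (\<lambda>h. A p * fst h + Bd K p * snd h)) (at p)" if p: "p \<in> SS" for p
  proof -
    have d1: "((\<lambda>p. (poly P ^^ K) (fst p)) has_derivative (\<lambda>h. D (fst p) * fst h)) (at p)"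
      using has_derivative_compose[OF has_derivative_fst[OF has_derivative_ident[of "at p"]] D(2)[of "fst p", unfolded has_field_derivative_def]]
      by simp
    have "(f0 has_field_derivative deriv f0 ((poly P ^^ K) (fst p))) (at ((poly P ^^ K) (fst p)))"
      by (rule holomorphic_derivI[OF f0hol open_ball pk[OF p]])
    then have d2: "(f0 has_derivative (*) (deriv f0 ((poly P ^^ K) (fst p)))) (at ((poly P ^^ K) (fst p)))"
      by (simp add: has_field_derivative_def)
    have d3: "((\<lambda>p. f0 ((poly P ^^ K) (fst p))) has_derivative (\<lambda>h. deriv f0 ((poly P ^^ K) (fst p)) * (D (fst p) * fst h))) (at p)"
      using has_derivative_compose[OF d1 d2] by simp
    have "(G K has_derivative (\<lambda>h. (As p * fst h + Bd K p * snd h) - deriv f0 ((poly P ^^ K) (fst p)) * (D (fst p) * fst h))) (at p)"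
      unfolding G_def[abs_def] by (rule has_derivative_diff[OF As(2) d3])
    then show ?thesis
      by (rule has_derivative_eq_rhs) (simp add: fun_eq_iff A_def algebra_simps)
  qed
  moreover have "isCont A p" if p: "p \<in> SS" for p
  proof -
    have "deriv f0 holomorphic_on ball 0 e0" by (rule holomorphic_deriv[OF f0hol open_ball])
    then have "continuous_on (ball 0 e0) (deriv f0)" by (rule holomorphic_on_imp_continuous_on)
    then have c1: "isCont (deriv f0) ((poly P ^^ K) (fst p))"
      using continuous_on_eq_continuous_at[OF open_ball] pk[OF p] by blast
    have c2: "isCont (\<lambda>p. (poly P ^^ K) (fst p)) p"
      unfolding isCont_def by (intro Piter_tendsto tendsto_fst tendsto_ident_at)
    have "isCont (\<lambda>p. deriv f0 ((poly P ^^ K) (fst p))) p"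
      by (rule isCont_o2[OF c2 c1])
    moreover have "isCont (\<lambda>p. D (fst p)) p" using D(1) by (auto intro: isCont_o2[OF isCont_fst])
    ultimately show ?thesis unfolding A_def using As(1) by (intro continuous_intros) auto
  qed
  ultimately show ?thesis by blast
qed

end


context LB
begin

lemma local_branch:
  assumes x0: "(z0, u0) \<in> Z K"
  shows "\<exists>\<eta>>0. \<forall>\<eta>'. 0 < \<eta>' \<and> \<eta>' \<le> \<eta> \<longrightarrow> (\<exists>\<delta>>0. \<exists>h. ball z0 \<delta> \<subseteq> ball 0 \<epsilon> \<and> continuous_on (ball z0 \<delta>) h \<and>
     h z0 = u0 \<and> (\<exists>c. (h has_field_derivative c) (at z0)) \<and> (\<forall>z\<in>ball z0 \<delta>. h z \<in> ball u0 \<eta>') \<and>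
     (\<forall>z\<in>ball z0 \<delta>. \<forall>u\<in>ball u0 \<eta>'. ((z, u) \<in> Z K \<longleftrightarrow> u = h z)))"
proof -
  obtain A where A: "\<And>p. p \<in> SS \<Longrightarrow> isCont A p" "\<And>p. p \<in> SS \<Longrightarrow> (G K has_derivative (\<lambda>h. A p * fst h + Bd K p * snd h)) (at p)"
    using G_hasd by blast
  define x0 where "x0 = (z0, u0)"
  have z0e: "z0 \<in> ball 0 \<epsilon>" using Z_fst[OF x0] by simp
  have x0SS: "x0 \<in> SS" using z0e by (simp add: SS_def x0_def)
  define \<Phi> where "\<Phi> p = (fst p, G K p)" for p
  define \<Phi>' where "\<Phi>' p = Blinfun (\<lambda>h. (fst h, A p * fst h + Bd K p * snd h))" for p
  have \<Phi>'a: "blinfun_apply (\<Phi>' p) = (\<lambda>h. (fst h, A p * fst h + Bd K p * snd h))" for p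
    unfolding \<Phi>'_def by (rule bounded_linear_Blinfun_apply[OF bl_aux])
  have derf: "(\<Phi> has_derivative blinfun_apply (\<Phi>' p)) (at p)" if "p \<in> SS" for p
    unfolding \<Phi>'a \<Phi>_def[abs_def]
    using has_derivative_Pair[OF has_derivative_fst[OF has_derivative_ident] A(2)[OF that]] by simp
  have contf: "continuous_on SS \<Phi>'"
  proof -
    have "isCont \<Phi>' p" if "p \<in> SS" for p
    proof (rule continuous_blinfun_componentwiseI1)
      fix i :: "complex \<times> complex"
      show "continuous (at p) (\<lambda>x. blinfun_apply (\<Phi>' x) i)"
        unfolding \<Phi>'a using A(1)[OF that] Bd_cont by (intro continuous_intros) auto
    qed
    then show ?thesis using continuous_on_eq_continuous_at[OF open_SS] by blast
  qed
  define a0 where "a0 = A x0"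
  define b0 where "b0 = Bd K x0"
  have b0nz: "b0 \<noteq> 0" unfolding b0_def x0_def using Bd_nz[OF x0] .
  define k where "k = (\<lambda>h::complex \<times> complex. (fst h, (snd h - a0 * fst h) / b0))"
  define invf where "invf = Blinfun k"
  have ka: "blinfun_apply invf = k" unfolding invf_def k_def by (rule bounded_linear_Blinfun_apply[OF bl_aux2])
  have \<Phi>'x0: "blinfun_apply (\<Phi>' x0) = (\<lambda>h. (fst h, a0 * fst h + b0 * snd h))"
    by (simp add: \<Phi>'a a0_def b0_def)
  have kphi: "k (blinfun_apply (\<Phi>' x0) h) = h" for h
    unfolding k_def \<Phi>'x0 using b0nz by (cases h) (simp add: field_simps)
  have phik: "blinfun_apply (\<Phi>' x0) (k h) = h" for h
    unfolding k_def \<Phi>'x0 using b0nz by (cases h) (simp add: field_simps)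
  have inv0: "invf o\<^sub>L \<Phi>' x0 = id_blinfun"
    by (rule blinfun_eqI) (simp add: ka kphi)
  obtain U' V g g' where IFT: "open U'" "U' \<subseteq> SS" "x0 \<in> U'" "open V" "\<Phi> x0 \<in> V" "homeomorphism U' V \<Phi> g"
    "\<And>y. y \<in> V \<Longrightarrow> (g has_derivative (g' y)) (at y)"
    "\<And>y. y \<in> V \<Longrightarrow> g' y = inv (blinfun_apply (\<Phi>'(g y)))"
    "\<And>y. y \<in> V \<Longrightarrow> bij (blinfun_apply (\<Phi>'(g y)))"
    by (rule inverse_function_theorem[OF open_SS derf contf x0SS inv0], assumption, rule that, assumption+)
  have \<Phi>x0: "\<Phi> x0 = (z0, 0)" using Z_iff[OF z0e] x0 by (simp add: \<Phi>_def x0_def)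
  have gc: "continuous_on V g" and gP: "\<And>x. x \<in> U' \<Longrightarrow> g (\<Phi> x) = x" and Pg: "\<And>y. y \<in> V \<Longrightarrow> \<Phi> (g y) = y"
    and gV: "\<And>y. y \<in> V \<Longrightarrow> g y \<in> U'"
    using IFT(6) unfolding homeomorphism_def by auto
  obtain \<rho> where \<rho>: "\<rho> > 0" "ball x0 \<rho> \<subseteq> U'" using IFT(1,3) open_contains_ball by blast
  obtain \<rho>2 where \<rho>2: "\<rho>2 > 0" "ball (z0, 0) \<rho>2 \<subseteq> V" using IFT(4,5) \<Phi>x0 open_contains_ball by metis
  define \<eta> where "\<eta> = \<rho> / 2"
  define h where "h z = snd (g (z, 0))" for z
  have gz00: "g (z0, 0) = x0" using gP[OF IFT(3)] \<Phi>x0 by simp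
  have h0: "h z0 = u0" unfolding h_def gz00 x0_def by simp
  have hc0: "isCont h z0"
  proof -
    have "isCont g (z0, 0)" using gc IFT(4,5) \<Phi>x0 continuous_on_eq_continuous_at by metis
    moreover have "isCont (\<lambda>z::complex. (z, 0::complex)) z0" by (intro continuous_intros)
    ultimately have "isCont (\<lambda>z. g (z, 0)) z0" using isCont_o2 by fastforce
    then show ?thesis unfolding h_def by (intro continuous_intros)
  qed
  have inV: "(z, 0) \<in> V" if "dist z z0 < \<rho>2" for z
    using \<rho>2(2) that by (auto simp: dist_Pair_Pair dist_commute)
  have gform: "g (z, 0) = (z, h z) \<and> (z, h z) \<in> U' \<and> G K (z, h z) = 0" if "dist z z0 < \<rho>2" for z
  proof -
    have e: "\<Phi> (g (z, 0)) = (z, 0)" using Pg[OF inV[OF that]] .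
    then have "fst (g (z, 0)) = z" by (simp add: \<Phi>_def)
    then have gz: "g (z, 0) = (z, h z)" unfolding h_def by (metis prod.collapse)
    moreover have "G K (z, h z) = 0" using e gz by (simp add: \<Phi>_def)
    ultimately show ?thesis using gV[OF inV[OF that]] by simp
  qed
  have hder: "\<exists>c. (h has_field_derivative c) (at z0)"
  proof -
    have V0: "(z0, 0) \<in> V" using IFT(5) \<Phi>x0 by simp
    have gd: "(g has_derivative g' (z0, 0)) (at (z0, 0))" by (rule IFT(7)[OF V0])
    have "g' (z0, 0) = inv (blinfun_apply (\<Phi>' x0))" using IFT(8)[OF V0] gz00 by simp
    also have "\<dots> = k"
      by (rule inv_unique_comp) (auto simp: fun_eq_iff kphi phik)
    finally have g'k: "g' (z0, 0) = k" .
    have pd: "((\<lambda>z::complex. (z, 0::complex)) has_derivative (\<lambda>d. (d, 0))) (at z0)"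
      by (rule has_derivative_Pair[OF has_derivative_ident has_derivative_const, simplified])
    have "((\<lambda>z. g (z, 0)) has_derivative (\<lambda>d. k (d, 0))) (at z0)"
      using has_derivative_compose[OF pd gd] g'k by simp
    from has_derivative_snd[OF this]
    have "(h has_derivative (\<lambda>d. snd (k (d, 0)))) (at z0)" unfolding h_def .
    then have "(h has_derivative (*) (- a0 / b0)) (at z0)"
      by (rule has_derivative_eq_rhs) (auto simp: k_def fun_eq_iff field_simps)
    then show ?thesis unfolding has_field_derivative_def by blast
  qed
  show ?thesis
  proof (rule exI[of _ \<eta>], intro conjI allI impI)
    show "0 < \<eta>" using \<rho> by (simp add: \<eta>_def)
    fix \<eta>' assume \<eta>': "0 < \<eta>' \<and> \<eta>' \<le> \<eta>"
    obtain \<delta>1 where \<delta>1: "\<delta>1 > 0" "\<And>z. dist z z0 < \<delta>1 \<Longrightarrow> dist (h z) (h z0) < \<eta>'"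
      using hc0 \<eta>' unfolding continuous_at_eps_delta by blast
    define \<delta> where "\<delta> = min (min \<delta>1 \<rho>2) (min \<eta> (\<epsilon> - norm z0))"
    have \<delta>pos: "\<delta> > 0" unfolding \<delta>_def using \<delta>1 \<rho>2 \<rho> z0e by (auto simp: \<eta>_def)
    have sub: "ball z0 \<delta> \<subseteq> ball 0 \<epsilon>"
    proof
      fix z assume "z \<in> ball z0 \<delta>"
      then have "norm (z - z0) < \<epsilon> - norm z0" unfolding \<delta>_def by (simp add: dist_norm norm_minus_commute)
      moreover have "norm z \<le> norm z0 + norm (z - z0)" by (metis add_diff_cancel_left' norm_triangle_ineq diff_add_cancel add.commute)
      ultimately show "z \<in> ball 0 \<epsilon>" by simp
    qed
    have zin: "dist z z0 < \<rho>2" "dist z z0 < \<delta>1" "dist z z0 < \<eta>" if "z \<in> ball z0 \<delta>" for z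
      using that unfolding \<delta>_def by (auto simp: dist_commute)
    have hcont: "continuous_on (ball z0 \<delta>) h"
    proof -
      have "continuous_on (ball z0 \<delta>) (\<lambda>z::complex. (z, 0::complex))" by (intro continuous_intros)
      moreover have "(\<lambda>z. (z, 0)) ` ball z0 \<delta> \<subseteq> V" using inV zin by auto
      ultimately have "continuous_on (ball z0 \<delta>) (\<lambda>z. g (z, 0))"
        using continuous_on_compose2[OF gc] by blast
      then show ?thesis unfolding h_def by (intro continuous_intros)
    qed
    have hb: "\<forall>z\<in>ball z0 \<delta>. h z \<in> ball u0 \<eta>'"
      using \<delta>1(2) zin h0 by (auto simp: dist_commute)
    have uniq: "\<forall>z\<in>ball z0 \<delta>. \<forall>u\<in>ball u0 \<eta>'. ((z, u) \<in> Z K \<longleftrightarrow> u = h z)"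
    proof (intro ballI iffI)
      fix z u assume z: "z \<in> ball z0 \<delta>" and u: "u \<in> ball u0 \<eta>'"
      have zb: "z \<in> ball 0 \<epsilon>" using sub z by blast
      {
        assume "(z, u) \<in> Z K"
        then have G0: "G K (z, u) = 0" using Z_iff[OF zb] by simp
        have "dist (z, u) (z0, u0) < \<rho>"
          by (rule dist_pair_lt) (use zin[OF z] u \<eta>' in \<open>auto simp: \<eta>_def dist_commute\<close>)
        then have "(z, u) \<in> U'" using \<rho>(2) by (auto simp: x0_def dist_commute)
        from gP[OF this] have "g (z, 0) = (z, u)" using G0 by (simp add: \<Phi>_def)
        then show "u = h z" using gform[OF zin(1)[OF z]] by simp
      }
      {
        assume "u = h z"
        then show "(z, u) \<in> Z K" using gform[OF zin(1)[OF z]] Z_iff[OF zb] by simp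
      }
    qed
    show "\<exists>\<delta>>0. \<exists>h. ball z0 \<delta> \<subseteq> ball 0 \<epsilon> \<and> continuous_on (ball z0 \<delta>) h \<and>
     h z0 = u0 \<and> (\<exists>c. (h has_field_derivative c) (at z0)) \<and> (\<forall>z\<in>ball z0 \<delta>. h z \<in> ball u0 \<eta>') \<and>
     (\<forall>z\<in>ball z0 \<delta>. \<forall>u\<in>ball u0 \<eta>'. ((z, u) \<in> Z K \<longleftrightarrow> u = h z))"
      using \<delta>pos sub hcont h0 hder hb uniq by blast
  qed
qed

end


context LB
begin

lemma G_isCont: "p \<in> SS \<Longrightarrow> isCont (G K) p"
proof -
  assume p: "p \<in> SS"
  obtain A where "\<forall>p\<in>SS. (G K has_derivative (\<lambda>h. A p * fst h + Bd K p * snd h)) (at p)"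
    using G_hasd by blast
  then show ?thesis using p has_derivative_continuous by blast
qed

lemma Z_closed_seq:
  assumes "zs \<longlonglongrightarrow> z" "us \<longlonglongrightarrow> u" "z \<in> ball 0 \<epsilon>" "\<And>m. (zs m, us m) \<in> Z K"
  shows "(z, u) \<in> Z K"
proof -
  have "(z, u) \<in> SS" using assms(3) by (simp add: SS_def)
  then have "(\<lambda>m. G K (zs m, us m)) \<longlonglongrightarrow> G K (z, u)"
    using isCont_tendsto_compose[OF G_isCont tendsto_Pair[OF assms(1,2)]] by blast
  moreover have "G K (zs m, us m) = 0" for m
    using Z_iff[of "zs m" "us m" K] Z_fst[OF assms(4)[of m]] assms(4)[of m] by simp
  ultimately have "(\<lambda>m. 0) \<longlonglongrightarrow> G K (z, u)" by simp
  then have "G K (z, u) = 0" using LIMSEQ_unique[OF tendsto_const] by metis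
  then show ?thesis using Z_iff[OF assms(3)] by simp
qed

lemma section_holo:
  assumes T: "open T" "T \<subseteq> ball 0 \<epsilon>" and hc: "continuous_on T h" and hs: "\<And>z. z \<in> T \<Longrightarrow> (z, h z) \<in> Z K"
  shows "h holomorphic_on T"
proof -
  have "\<exists>c. (h has_field_derivative c) (at z1)" if z1: "z1 \<in> T" for z1
  proof -
    obtain \<eta> where \<eta>: "\<eta> > 0" and br: "\<forall>\<eta>'. 0 < \<eta>' \<and> \<eta>' \<le> \<eta> \<longrightarrow> (\<exists>\<delta>>0. \<exists>h1. ball z1 \<delta> \<subseteq> ball 0 \<epsilon> \<and> continuous_on (ball z1 \<delta>) h1 \<and>
     h1 z1 = h z1 \<and> (\<exists>c. (h1 has_field_derivative c) (at z1)) \<and> (\<forall>z\<in>ball z1 \<delta>. h1 z \<in> ball (h z1) \<eta>') \<and>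
     (\<forall>z\<in>ball z1 \<delta>. \<forall>u\<in>ball (h z1) \<eta>'. ((z, u) \<in> Z K \<longleftrightarrow> u = h1 z)))"
      using local_branch[OF hs[OF z1]] by blast
    obtain \<delta> h1 where \<delta>: "\<delta> > 0" "\<exists>c. (h1 has_field_derivative c) (at z1)"
       "\<forall>z\<in>ball z1 \<delta>. \<forall>u\<in>ball (h z1) \<eta>. ((z, u) \<in> Z K \<longleftrightarrow> u = h1 z)"
      using br \<eta> by blast
    have "isCont h z1" using hc T(1) z1 continuous_on_eq_continuous_at by blast
    then obtain \<delta>2 where \<delta>2: "\<delta>2 > 0" "\<And>z. dist z z1 < \<delta>2 \<Longrightarrow> dist (h z) (h z1) < \<eta>"
      using \<eta> unfolding continuous_at_eps_delta by blast
    obtain \<delta>3 where \<delta>3: "\<delta>3 > 0" "ball z1 \<delta>3 \<subseteq> T" using T(1) z1 open_contains_ball by blast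
    define d where "d = min \<delta> (min \<delta>2 \<delta>3)"
    have dpos: "d > 0" using \<delta> \<delta>2 \<delta>3 by (simp add: d_def)
    have eq: "h1 z = h z" if "z \<in> ball z1 d" for z
    proof -
      have zT: "z \<in> T" using that \<delta>3 unfolding d_def by auto
      have "h z \<in> ball (h z1) \<eta>" using \<delta>2(2)[of z] that unfolding d_def by (auto simp: dist_commute)
      moreover have "z \<in> ball z1 \<delta>" using that unfolding d_def by auto
      ultimately show ?thesis using \<delta>(3) hs[OF zT] by metis
    qed
    obtain c where "(h1 has_field_derivative c) (at z1)" using \<delta>(2) by blast
    then have "(h has_field_derivative c) (at z1)"
      by (rule has_field_derivative_transform_within_open[OF _ open_ball]) (use dpos eq in auto)
    then show ?thesis by blast
  qed
  then show ?thesis using holomorphic_on_open[OF T(1)] by blast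
qed

lemma fiber_finite:
  assumes z0: "z0 \<in> ball 0 \<epsilon>"
  shows "finite {u. (z0, u) \<in> Z K}"
proof (rule ccontr)
  define Fb where "Fb = {u. (z0, u) \<in> Z K}"
  assume "\<not> finite {u. (z0, u) \<in> Z K}"
  then have inf: "infinite Fb" by (simp add: Fb_def)
  have bd: "bounded Fb" unfolding Fb_def bounded_iff using Z_bound by (metis less_imp_le snd_conv mem_Collect_eq)
  obtain c where c: "c islimpt Fb" using bounded_infinite_imp_islimpt[OF order_refl bd inf] by blast
  have cont: "continuous_on UNIV (\<lambda>u. G K (z0, u))"
  proof -
    have "isCont (\<lambda>u. G K (z0, u)) u" for u
    proof -
      have "(z0, u) \<in> SS" using z0 by (simp add: SS_def)
      have "isCont (\<lambda>u. (z0, u)) u" by (intro continuous_intros)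
      from isCont_o2[OF this G_isCont[OF \<open>(z0, u) \<in> SS\<close>]]
      show ?thesis .
    qed
    then show ?thesis by (simp add: continuous_at_imp_continuous_on)
  qed
  have "Fb = {u. G K (z0, u) = 0}" unfolding Fb_def using Z_iff[OF z0] by auto
  then have "closed Fb" using closed_Collect_eq[OF cont continuous_on_const] by simp
  then have cF: "c \<in> Fb" using c closed_limpt by blast
  obtain \<eta> where \<eta>: "\<eta> > 0" and br: "\<forall>\<eta>'. 0 < \<eta>' \<and> \<eta>' \<le> \<eta> \<longrightarrow> (\<exists>\<delta>>0. \<exists>h1. ball z0 \<delta> \<subseteq> ball 0 \<epsilon> \<and> continuous_on (ball z0 \<delta>) h1 \<and>
     h1 z0 = c \<and> (\<exists>c'. (h1 has_field_derivative c') (at z0)) \<and> (\<forall>z\<in>ball z0 \<delta>. h1 z \<in> ball c \<eta>') \<and>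
     (\<forall>z\<in>ball z0 \<delta>. \<forall>u\<in>ball c \<eta>'. ((z, u) \<in> Z K \<longleftrightarrow> u = h1 z)))"
    using local_branch[of z0 c K] cF unfolding Fb_def by blast
  obtain \<delta> h1 where \<delta>: "\<delta> > 0" "h1 z0 = c" "\<forall>z\<in>ball z0 \<delta>. \<forall>u\<in>ball c \<eta>. ((z, u) \<in> Z K \<longleftrightarrow> u = h1 z)"
    using br \<eta> by blast
  obtain x' where x': "x' \<in> Fb" "x' \<noteq> c" "dist x' c < \<eta>" using c \<eta> unfolding islimpt_approachable by blast
  have "x' = h1 z0" using \<delta>(3) \<delta>(1) x' unfolding Fb_def by (auto simp: dist_commute)
  then show False using x' \<delta>(2) by simp
qed

lemma Z_surj: "fst ` Z K = ball 0 \<epsilon>"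
proof
  show "fst ` Z K \<subseteq> ball 0 \<epsilon>" using Z_fst by blast
  define S where "S = fst ` Z K"
  have S0: "0 \<in> S"
  proof -
    have "(poly (Qc 0) ^^ K) 0 = 0" by (induction K) (auto simp: Q00)
    then have "(F ^^ K) (0, 0) = (0, 0)" by (simp add: F_iter Piter0 s_zero)
    moreover have "(0::complex, 0::complex) \<in> G0" using e0pos f00 by (force simp: G0_def graph_on_def)
    ultimately have "(0, 0) \<in> Z K" using eps by (simp add: Z_def)
    then show ?thesis unfolding S_def by force
  qed
  have op: "openin (top_of_set (ball 0 \<epsilon>)) S"
  proof -
    have "\<exists>\<delta>>0. ball z0 \<delta> \<subseteq> S" if z0S: "z0 \<in> S" for z0
    proof -
      obtain u0 where u0: "(z0, u0) \<in> Z K" using z0S unfolding S_def by force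
      obtain \<eta> where \<eta>: "\<eta> > 0" and br: "\<forall>\<eta>'. 0 < \<eta>' \<and> \<eta>' \<le> \<eta> \<longrightarrow> (\<exists>\<delta>>0. \<exists>h1. ball z0 \<delta> \<subseteq> ball 0 \<epsilon> \<and> continuous_on (ball z0 \<delta>) h1 \<and>
       h1 z0 = u0 \<and> (\<exists>c'. (h1 has_field_derivative c') (at z0)) \<and> (\<forall>z\<in>ball z0 \<delta>. h1 z \<in> ball u0 \<eta>') \<and>
       (\<forall>z\<in>ball z0 \<delta>. \<forall>u\<in>ball u0 \<eta>'. ((z, u) \<in> Z K \<longleftrightarrow> u = h1 z)))"
        using local_branch[OF u0] by blast
      obtain \<delta> h1 where \<delta>: "\<delta> > 0" "\<forall>z\<in>ball z0 \<delta>. h1 z \<in> ball u0 \<eta>" "\<forall>z\<in>ball z0 \<delta>. \<forall>u\<in>ball u0 \<eta>. ((z, u) \<in> Z K \<longleftrightarrow> u = h1 z)"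
        using br \<eta> by blast
      have "ball z0 \<delta> \<subseteq> S"
      proof
        fix z assume z: "z \<in> ball z0 \<delta>"
        then have "(z, h1 z) \<in> Z K" using \<delta>(2,3) by blast
        then show "z \<in> S" unfolding S_def by force
      qed
      then show ?thesis using \<delta>(1) by blast
    qed
    then have "open S" by (simp add: open_contains_ball)
    moreover have "S \<subseteq> ball 0 \<epsilon>" unfolding S_def using Z_fst by blast
    ultimately show ?thesis by (metis inf.absorb_iff2 openin_open_Int)
  qed
  have cl: "closedin (top_of_set (ball 0 \<epsilon>)) S"
    unfolding closedin_limpt
  proof (intro conjI allI impI)
    show "S \<subseteq> ball 0 \<epsilon>" unfolding S_def using Z_fst by blast
    fix x assume x: "x islimpt S \<and> x \<in> ball 0 \<epsilon>"
    obtain zs where zs: "\<And>n. zs n \<in> S - {x}" "zs \<longlonglongrightarrow> x" using x islimpt_sequential by metis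
    have "\<forall>n. \<exists>u. (zs n, u) \<in> Z K" using zs(1) unfolding S_def by force
    then obtain us where us: "\<And>n. (zs n, us n) \<in> Z K" by metis
    have "\<forall>n. us n \<in> cball 0 R" using Z_bound us by (metis less_imp_le mem_cball_0 snd_conv)
    from seq_compactE[OF compact_imp_seq_compact[OF compact_cball] this]
    obtain c \<rho> where c: "strict_mono \<rho>" "(us \<circ> \<rho>) \<longlonglongrightarrow> c" by blast
    have "(zs \<circ> \<rho>) \<longlonglongrightarrow> x" using zs(2) c(1) by (rule LIMSEQ_subseq_LIMSEQ)
    then have "(x, c) \<in> Z K"
      by (rule Z_closed_seq[OF _ c(2)]) (use x us in auto)
    then show "x \<in> S" unfolding S_def by force
  qed
  have cb: "connected (ball (0::complex) \<epsilon>)" by simp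
  have "S = {} \<or> S = ball 0 \<epsilon>"
    using connected_clopen[THEN iffD1, OF cb, rule_format, of S] op cl by blast
  then have "S = ball 0 \<epsilon>" using S0 by auto
  then show "ball 0 \<epsilon> \<subseteq> fst ` Z K" unfolding S_def by simp
qed

end


context LB
begin

lemma Z_covering: "covering_space (Z K) fst (ball 0 \<epsilon>)"
  unfolding covering_space_def
proof (intro conjI ballI)
  show "continuous_on (Z K) fst" by (intro continuous_intros)
  show "fst ` Z K = ball 0 \<epsilon>" by (rule Z_surj)
  fix z0 :: complex assume z0: "z0 \<in> ball 0 \<epsilon>"
  define Fb where "Fb = {u. (z0, u) \<in> Z K}"
  have finF: "finite Fb" unfolding Fb_def by (rule fiber_finite[OF z0])
  define Q where "Q u \<eta> \<delta> h \<longleftrightarrow> ball z0 \<delta> \<subseteq> ball 0 \<epsilon> \<and> continuous_on (ball z0 \<delta>) h \<and>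
     h z0 = u \<and> (\<exists>c. (h has_field_derivative c) (at z0)) \<and> (\<forall>z\<in>ball z0 \<delta>. h z \<in> ball u \<eta>) \<and>
     (\<forall>z\<in>ball z0 \<delta>. \<forall>y\<in>ball u \<eta>. ((z, y) \<in> Z K \<longleftrightarrow> y = h z))" for u \<eta> \<delta> h
  have "\<forall>u\<in>Fb. \<exists>\<eta>. \<eta> > 0 \<and> (\<forall>\<eta>'. 0 < \<eta>' \<and> \<eta>' \<le> \<eta> \<longrightarrow> (\<exists>\<delta>>0. \<exists>h. Q u \<eta>' \<delta> h))"
  proof
    fix u assume "u \<in> Fb"
    then have "(z0, u) \<in> Z K" by (simp add: Fb_def)
    from local_branch[OF this] show "\<exists>\<eta>. \<eta> > 0 \<and> (\<forall>\<eta>'. 0 < \<eta>' \<and> \<eta>' \<le> \<eta> \<longrightarrow> (\<exists>\<delta>>0. \<exists>h. Q u \<eta>' \<delta> h))"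
      unfolding Q_def by blast
  qed
  then have "\<exists>\<eta>f. \<forall>u\<in>Fb. \<eta>f u > 0 \<and> (\<forall>\<eta>'. 0 < \<eta>' \<and> \<eta>' \<le> \<eta>f u \<longrightarrow> (\<exists>\<delta>>0. \<exists>h. Q u \<eta>' \<delta> h))"
    by (rule bchoice)
  then obtain \<eta>f where \<eta>f: "\<And>u. u \<in> Fb \<Longrightarrow> \<eta>f u > 0"
    "\<And>u \<eta>'. u \<in> Fb \<Longrightarrow> 0 < \<eta>' \<Longrightarrow> \<eta>' \<le> \<eta>f u \<Longrightarrow> (\<exists>\<delta>>0. \<exists>h. Q u \<eta>' \<delta> h)"
    by blast
  define E where "E = insert 1 (\<eta>f ` Fb \<union> (\<lambda>p. dist (fst p) (snd p) / 2) ` {p. fst p \<in> Fb \<and> snd p \<in> Fb \<and> fst p \<noteq> snd p})"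
  have finE: "finite E"
  proof -
    have "{p. fst p \<in> Fb \<and> snd p \<in> Fb \<and> fst p \<noteq> snd p} \<subseteq> Fb \<times> Fb" by auto
    then have "finite {p. fst p \<in> Fb \<and> snd p \<in> Fb \<and> fst p \<noteq> snd p}" using finF finite_subset by blast
    then show ?thesis unfolding E_def using finF by simp
  qed
  define \<eta> where "\<eta> = Min E"
  have Epos: "\<forall>x\<in>E. x > 0" unfolding E_def using \<eta>f by auto
  have \<eta>pos: "\<eta> > 0" unfolding \<eta>_def using finE Epos by (simp add: E_def Min_gr_iff)
  have \<eta>le: "\<eta> \<le> \<eta>f u" if "u \<in> Fb" for u unfolding \<eta>_def using finE that by (auto simp: E_def)
  have \<eta>dist: "\<eta> \<le> dist u v / 2" if "u \<in> Fb" "v \<in> Fb" "u \<noteq> v" for u v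
  proof -
    have "dist u v / 2 \<in> E" unfolding E_def using that by (auto intro!: image_eqI[of _ _ "(u, v)"])
    then show ?thesis unfolding \<eta>_def using Min_le[OF finE] by blast
  qed
  have "\<forall>u\<in>Fb. \<exists>\<delta>. \<delta> > 0 \<and> (\<exists>h. Q u \<eta> \<delta> h)" using \<eta>f(2) \<eta>le \<eta>pos by blast
  then have "\<exists>\<delta>f. \<forall>u\<in>Fb. \<delta>f u > 0 \<and> (\<exists>h. Q u \<eta> (\<delta>f u) h)" by (rule bchoice)
  then obtain \<delta>f where \<delta>f: "\<And>u. u \<in> Fb \<Longrightarrow> \<delta>f u > 0" "\<forall>u\<in>Fb. \<exists>h. Q u \<eta> (\<delta>f u) h" by blast
  from bchoice[OF \<delta>f(2)] obtain hf where hf: "\<And>u. u \<in> Fb \<Longrightarrow> Q u \<eta> (\<delta>f u) (hf u)" by blast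
  define \<delta>0 where "\<delta>0 = Min (insert (\<epsilon> - norm z0) (\<delta>f ` Fb))"
  have \<delta>0pos: "\<delta>0 > 0" unfolding \<delta>0_def using finF \<delta>f(1) z0 by (auto simp: Min_gr_iff)
  have \<delta>0le: "\<delta>0 \<le> \<delta>f u" if "u \<in> Fb" for u unfolding \<delta>0_def using finF that by simp
  have \<delta>0e: "\<delta>0 \<le> \<epsilon> - norm z0" unfolding \<delta>0_def using finF by simp
  have "\<exists>\<delta>>0. \<delta> \<le> \<delta>0 \<and> (\<forall>z\<in>ball z0 \<delta>. \<forall>y. (z, y) \<in> Z K \<longrightarrow> (\<exists>v\<in>Fb. y \<in> ball v \<eta>))"
  proof (rule ccontr)
    assume H: "\<not> ?thesis"
    have "\<forall>m::nat. \<exists>p. dist z0 (fst p) < \<delta>0 * inverse (real (Suc m)) \<and> p \<in> Z K \<and> \<not> (\<exists>v\<in>Fb. snd p \<in> ball v \<eta>)"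
    proof
      fix m :: nat
      have "0 < \<delta>0 * inverse (real (Suc m))" "\<delta>0 * inverse (real (Suc m)) \<le> \<delta>0"
        using \<delta>0pos by (auto simp: field_simps)
      then show "\<exists>p. dist z0 (fst p) < \<delta>0 * inverse (real (Suc m)) \<and> p \<in> Z K \<and> \<not> (\<exists>v\<in>Fb. snd p \<in> ball v \<eta>)"
        using H by force
    qed
    then obtain ps where ps: "\<And>m. dist z0 (fst (ps m)) < \<delta>0 * inverse (real (Suc m))"
      "\<And>m. ps m \<in> Z K" "\<And>m. \<not> (\<exists>v\<in>Fb. snd (ps m) \<in> ball v \<eta>)"
      by metis
    have "\<forall>n. snd (ps n) \<in> cball 0 R"
    proof
      fix n show "snd (ps n) \<in> cball 0 R" using Z_bound[OF ps(2)[of n]] by simp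
    qed
    from seq_compactE[OF compact_imp_seq_compact[OF compact_cball] this]
    obtain c \<rho> where c: "strict_mono \<rho>" "((\<lambda>n. snd (ps n)) \<circ> \<rho>) \<longlonglongrightarrow> c" by blast
    have zl: "(\<lambda>m. fst (ps m)) \<longlonglongrightarrow> z0"
    proof (rule LIM_zero_cancel, rule Lim_null_comparison)
      show "\<forall>\<^sub>F m in sequentially. norm (fst (ps m) - z0) \<le> \<delta>0 * inverse (real (Suc m))"
        using ps(1) by (intro always_eventually allI) (simp add: dist_norm norm_minus_commute less_imp_le)
      show "(\<lambda>m. \<delta>0 * inverse (real (Suc m))) \<longlonglongrightarrow> 0"
        using tendsto_mult_right_zero[OF LIMSEQ_inverse_real_of_nat] by simp
    qed
    have zl2: "((\<lambda>m. fst (ps m)) \<circ> \<rho>) \<longlonglongrightarrow> z0" using LIMSEQ_subseq_LIMSEQ[OF zl c(1)] .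
    have "(z0, c) \<in> Z K"
      by (rule Z_closed_seq[OF zl2 c(2) z0]) (simp add: ps(2))
    then have cF: "c \<in> Fb" by (simp add: Fb_def)
    have "\<forall>\<^sub>F m in sequentially. dist (((\<lambda>n. snd (ps n)) \<circ> \<rho>) m) c < \<eta>"
      using tendstoD[OF c(2) \<eta>pos] .
    then obtain m where "dist (snd (ps (\<rho> m))) c < \<eta>"
      unfolding eventually_sequentially by auto
    then show False using ps(3)[of "\<rho> m"] cF by (auto simp: dist_commute)
  qed
  then obtain \<delta> where \<delta>: "\<delta> > 0" "\<delta> \<le> \<delta>0" "\<And>z y. z \<in> ball z0 \<delta> \<Longrightarrow> (z, y) \<in> Z K \<Longrightarrow> (\<exists>v\<in>Fb. y \<in> ball v \<eta>)"
    by blast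
  define T where "T = ball z0 \<delta>"
  have Tsub: "T \<subseteq> ball 0 \<epsilon>"
  proof
    fix z assume "z \<in> T"
    then have "norm (z - z0) < \<epsilon> - norm z0" using \<delta>(2) \<delta>0e unfolding T_def by (simp add: dist_norm norm_minus_commute)
    moreover have "norm z \<le> norm z0 + norm (z - z0)" by (metis add_diff_cancel_left' norm_triangle_ineq diff_add_cancel add.commute)
    ultimately show "z \<in> ball 0 \<epsilon>" by simp
  qed
  have Tu: "T \<subseteq> ball z0 (\<delta>f u)" if "u \<in> Fb" for u
    using \<delta>0le[OF that] \<delta>(2) unfolding T_def by auto
  have Qu: "Q u \<eta> (\<delta>f u) (hf u)" if "u \<in> Fb" for u using hf that .
  have inZ: "(z, hf u z) \<in> Z K" and inB: "hf u z \<in> ball u \<eta>" if "u \<in> Fb" "z \<in> T" for u z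
    using Qu[OF that(1)] Tu[OF that(1)] that(2) unfolding Q_def by blast+
  have uniq: "y = hf u z" if "u \<in> Fb" "z \<in> T" "(z, y) \<in> Z K" "y \<in> ball u \<eta>" for u z y
    using Qu[OF that(1)] Tu[OF that(1)] that(2-4) unfolding Q_def by blast
  define Vs where "Vs u = (\<lambda>z. (z, hf u z)) ` T" for u
  have Vs_eq: "Vs u = Z K \<inter> (T \<times> ball u \<eta>)" if "u \<in> Fb" for u
  proof
    show "Vs u \<subseteq> Z K \<inter> (T \<times> ball u \<eta>)" unfolding Vs_def using inZ inB that by auto
    show "Z K \<inter> (T \<times> ball u \<eta>) \<subseteq> Vs u"
    proof
      fix p assume p: "p \<in> Z K \<inter> (T \<times> ball u \<eta>)"
      then have "snd p = hf u (fst p)" using uniq[OF that, of "fst p" "snd p"] by auto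
      then show "p \<in> Vs u" unfolding Vs_def using p by (auto intro: image_eqI[of _ _ "fst p"] simp: prod_eq_iff)
    qed
  qed
  show "\<exists>T. z0 \<in> T \<and> openin (top_of_set (ball 0 \<epsilon>)) T \<and>
    (\<exists>v. \<Union> v = Z K \<inter> fst -` T \<and> (\<forall>u\<in>v. openin (top_of_set (Z K)) u) \<and> pairwise disjnt v \<and>
         (\<forall>u\<in>v. \<exists>q. homeomorphism u T fst q))"
  proof (intro exI[of _ T] conjI exI[of _ "Vs ` Fb"])
    show "z0 \<in> T" unfolding T_def using \<delta>(1) by simp
    show "openin (top_of_set (ball 0 \<epsilon>)) T"
      using openin_open_Int[of T "ball 0 \<epsilon>"] Tsub unfolding T_def by (simp add: inf.absorb2)
    show "\<Union> (Vs ` Fb) = Z K \<inter> fst -` T"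
    proof
      show "\<Union> (Vs ` Fb) \<subseteq> Z K \<inter> fst -` T" unfolding Vs_def using inZ by auto
      show "Z K \<inter> fst -` T \<subseteq> \<Union> (Vs ` Fb)"
      proof
        fix p assume p: "p \<in> Z K \<inter> fst -` T"
        then obtain v where v: "v \<in> Fb" "snd p \<in> ball v \<eta>" using \<delta>(3)[of "fst p" "snd p"] unfolding T_def by auto
        then have "p \<in> Vs v" using Vs_eq[OF v(1)] p by (auto simp: mem_Times_iff)
        then show "p \<in> \<Union> (Vs ` Fb)" using v(1) by blast
      qed
    qed
    show "\<forall>u\<in>Vs ` Fb. openin (top_of_set (Z K)) u"
    proof
      fix U assume "U \<in> Vs ` Fb"
      then obtain u where u: "u \<in> Fb" "U = Vs u" by blast
      have "open (T \<times> ball u \<eta>)" unfolding T_def by (intro open_Times open_ball)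
      then show "openin (top_of_set (Z K)) U" unfolding u(2) Vs_eq[OF u(1)] by (rule openin_open_Int)
    qed
    show "pairwise disjnt (Vs ` Fb)"
    proof (rule pairwiseI)
      fix U U' assume U: "U \<in> Vs ` Fb" "U' \<in> Vs ` Fb" "U \<noteq> U'"
      then obtain u u' where uu: "u \<in> Fb" "u' \<in> Fb" "U = Vs u" "U' = Vs u'" by blast
      then have "u \<noteq> u'" using U(3) by blast
      then have d2: "\<eta> \<le> dist u u' / 2" using \<eta>dist[OF uu(1,2)] by blast
      have "ball u \<eta> \<inter> ball u' \<eta> = {}"
      proof (rule equals0I)
        fix y assume y: "y \<in> ball u \<eta> \<inter> ball u' \<eta>"
        have "dist u u' \<le> dist u y + dist y u'" by (rule dist_triangle)
        moreover have "dist u y < \<eta>" "dist y u' < \<eta>" using y by (auto simp: dist_commute)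
        ultimately show False using d2 by linarith
      qed
      then show "disjnt U U'" unfolding uu(3,4) Vs_eq[OF uu(1)] Vs_eq[OF uu(2)] disjnt_def by auto
    qed
    show "\<forall>u\<in>Vs ` Fb. \<exists>q. homeomorphism u T fst q"
    proof
      fix U assume "U \<in> Vs ` Fb"
      then obtain u where u: "u \<in> Fb" "U = Vs u" by blast
      have hc: "continuous_on T (hf u)"
        using Qu[OF u(1)] Tu[OF u(1)] continuous_on_subset unfolding Q_def by blast
      have "homeomorphism U T fst (\<lambda>z. (z, hf u z))"
        unfolding homeomorphism_def u(2) Vs_def
        using hc by (auto intro!: continuous_intros simp: image_image)
      then show "\<exists>q. homeomorphism U T fst q" by blast
    qed
  qed
qed

end


context LB
begin

lemma lift_exists:
  assumes a: "(z1, u1) \<in> Z K"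
  shows "\<exists>h. continuous_on (ball 0 \<epsilon>) h \<and> h z1 = u1 \<and> (\<forall>z\<in>ball 0 \<epsilon>. (z, h z) \<in> Z K)"
proof -
  have z1: "z1 \<in> ball 0 \<epsilon>" using Z_fst[OF a] by simp
  have sc: "simply_connected (ball (0::complex) \<epsilon>)" by (rule convex_imp_simply_connected[OF convex_ball])
  have lpc: "locally path_connected (ball (0::complex) \<epsilon>)" by (rule open_imp_locally_path_connected[OF open_ball])
  have "\<exists>g. continuous_on (ball 0 \<epsilon>) g \<and> g \<in> ball 0 \<epsilon> \<rightarrow> Z K \<and> g z1 = (z1, u1) \<and> (\<forall>y\<in>ball 0 \<epsilon>. fst (g y) = y)"
  proof (rule covering_space_lift_strong[OF Z_covering a z1 sc lpc, of "\<lambda>z. z"])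
    show "continuous_on (ball 0 \<epsilon>) (\<lambda>z. z)" by (intro continuous_intros)
    show "(\<lambda>z. z) \<in> ball 0 \<epsilon> \<rightarrow> ball 0 \<epsilon>" by auto
    show "z1 = fst (z1, u1)" by simp
  next
    fix g assume "continuous_on (ball 0 \<epsilon>) g" "g \<in> ball 0 \<epsilon> \<rightarrow> Z K" "g z1 = (z1, u1)" "\<And>y. y \<in> ball 0 \<epsilon> \<Longrightarrow> fst (g y) = y"
    then show "\<exists>g. continuous_on (ball 0 \<epsilon>) g \<and> g \<in> ball 0 \<epsilon> \<rightarrow> Z K \<and> g z1 = (z1, u1) \<and> (\<forall>y\<in>ball 0 \<epsilon>. fst (g y) = y)"
      by blast
  qed
  then obtain g where g: "continuous_on (ball 0 \<epsilon>) g" "g \<in> ball 0 \<epsilon> \<rightarrow> Z K" "g z1 = (z1, u1)" "\<And>y. y \<in> ball 0 \<epsilon> \<Longrightarrow> fst (g y) = y"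
    by blast
  define h where "h z = snd (g z)" for z
  have gz: "g z = (z, h z)" if "z \<in> ball 0 \<epsilon>" for z using g(4)[OF that] unfolding h_def by (metis prod.collapse)
  have "continuous_on (ball 0 \<epsilon>) h" unfolding h_def using g(1) by (intro continuous_intros)
  moreover have "h z1 = u1" unfolding h_def g(3) by simp
  moreover have "\<forall>z\<in>ball 0 \<epsilon>. (z, h z) \<in> Z K" using g(2) gz by (metis PiE)
  ultimately show ?thesis by blast
qed

lemma lift_unique:
  assumes h1: "continuous_on (ball 0 \<epsilon>) h1" "\<And>z. z \<in> ball 0 \<epsilon> \<Longrightarrow> (z, h1 z) \<in> Z K"
    and h2: "continuous_on (ball 0 \<epsilon>) h2" "\<And>z. z \<in> ball 0 \<epsilon> \<Longrightarrow> (z, h2 z) \<in> Z K"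
    and z1: "z1 \<in> ball 0 \<epsilon>" "h1 z1 = h2 z1" and z: "z \<in> ball 0 \<epsilon>"
  shows "h1 z = h2 z"
proof -
  have e1: "(\<lambda>z. (z, h1 z)) z1 = (\<lambda>z. (z, h2 z)) z1" using z1 by simp
  have e2: "continuous_on (ball 0 \<epsilon>) (\<lambda>z::complex. z)" by (intro continuous_intros)
  have e3: "(\<lambda>z::complex. z) \<in> ball 0 \<epsilon> \<rightarrow> ball 0 \<epsilon>" by auto
  have e4: "continuous_on (ball 0 \<epsilon>) (\<lambda>z. (z, h1 z))" using h1(1) by (intro continuous_intros)
  have e5: "continuous_on (ball 0 \<epsilon>) (\<lambda>z. (z, h2 z))" using h2(1) by (intro continuous_intros)
  have e6: "(\<lambda>z. (z, h1 z)) \<in> ball 0 \<epsilon> \<rightarrow> Z K" using h1(2) by auto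
  have e7: "(\<lambda>z. (z, h2 z)) \<in> ball 0 \<epsilon> \<rightarrow> Z K" using h2(2) by auto
  have e8: "\<And>x. x \<in> ball 0 \<epsilon> \<Longrightarrow> x = fst ((\<lambda>z. (z, h1 z)) x)" by simp
  have e9: "\<And>x. x \<in> ball 0 \<epsilon> \<Longrightarrow> x = fst ((\<lambda>z. (z, h2 z)) x)" by simp
  have e10: "connected (ball (0::complex) \<epsilon>)" by simp
  have "(\<lambda>z. (z, h1 z)) z = (\<lambda>z. (z, h2 z)) z"
    by (rule covering_space_lift_unique[OF Z_covering e1 e2 e3 e4 e6 e8 e5 e7 e9 e10 z1(1) z])
  then show ?thesis by simp
qed

definition "Sec h \<longleftrightarrow> continuous_on (ball 0 \<epsilon>) h \<and> (\<exists>k. \<forall>z\<in>ball 0 \<epsilon>. (z, h z) \<in> Z k)"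

lemma sec_same:
  assumes "Sec h1" "Sec h2" "z1 \<in> ball 0 \<epsilon>" "h1 z1 = h2 z1" "z \<in> ball 0 \<epsilon>"
  shows "h1 z = h2 z"
proof -
  obtain k1 k2 where k: "\<forall>z\<in>ball 0 \<epsilon>. (z, h1 z) \<in> Z k1" "\<forall>z\<in>ball 0 \<epsilon>. (z, h2 z) \<in> Z k2"
    using assms(1,2) unfolding Sec_def by blast
  have "\<forall>z\<in>ball 0 \<epsilon>. (z, h1 z) \<in> Z (max k1 k2)" "\<forall>z\<in>ball 0 \<epsilon>. (z, h2 z) \<in> Z (max k1 k2)"
    using k Z_mono[of k1 "max k1 k2"] Z_mono[of k2 "max k1 k2"] by auto
  then show ?thesis
    using lift_unique[of h1 "max k1 k2" h2 z1 z] assms unfolding Sec_def by blast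
qed

lemma pre_Z: "(F ^^ k) (0, v) = (0, 0) \<Longrightarrow> (0, v) \<in> Z k"
proof -
  assume "(F ^^ k) (0, v) = (0, 0)"
  moreover have "(0::complex, 0::complex) \<in> G0" using e0pos f00 by (force simp: G0_def graph_on_def)
  ultimately show ?thesis using eps by (simp add: Z_def)
qed

lemma Z_pre: "(0, v) \<in> Z k \<Longrightarrow> (F ^^ k) (0, v) = (0, 0)"
proof -
  assume "(0, v) \<in> Z k"
  then have "(0, s k 0 v) \<in> G0" by (simp add: Z_def F_iter Piter0)
  then have "s k 0 v = f0 0" by (auto simp: G0_def graph_on_def)
  then show ?thesis by (simp add: F_iter Piter0 f00)
qed

definition "fsec v = (SOME h. Sec h \<and> h 0 = v)"

lemma fsec: assumes "\<exists>k. (F ^^ k) (0, v) = (0, 0)" shows "Sec (fsec v) \<and> fsec v 0 = v"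
proof -
  obtain k where "(F ^^ k) (0, v) = (0, 0)" using assms by blast
  then have "(0, v) \<in> Z k" by (rule pre_Z)
  from lift_exists[OF this] obtain h where "continuous_on (ball 0 \<epsilon>) h" "h 0 = v" "\<forall>z\<in>ball 0 \<epsilon>. (z, h z) \<in> Z k"
    by blast
  then have "\<exists>h. Sec h \<and> h 0 = v" unfolding Sec_def by blast
  then show ?thesis unfolding fsec_def by (rule someI_ex)
qed

theorem main: "\<exists>f :: complex \<Rightarrow> complex \<Rightarrow> complex.
    (\<forall>v. (\<exists>k. (skew P Qc ^^ k) (0, v) = (0, 0)) \<longrightarrow>
        f v holomorphic_on ball 0 \<epsilon> \<and> f v 0 = v \<and>
        (\<exists>k. (skew P Qc ^^ k) ` graph_on \<epsilon> (f v) \<subseteq> graph_on e0 f0)) \<and>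
    (\<forall>v v'. (\<exists>k. (skew P Qc ^^ k) (0, v) = (0, 0)) \<and> (\<exists>k. (skew P Qc ^^ k) (0, v') = (0, 0))
        \<and> v \<noteq> v' \<longrightarrow> graph_on \<epsilon> (f v) \<inter> graph_on \<epsilon> (f v') = {}) \<and>
    (\<forall>z u. z \<in> ball 0 \<epsilon> \<and> (\<exists>k. (skew P Qc ^^ k) (z, u) \<in> graph_on e0 f0) \<longrightarrow>
        (\<exists>v. (\<exists>k. (skew P Qc ^^ k) (0, v) = (0, 0)) \<and> u = f v z))"
proof (intro exI[of _ fsec] conjI allI impI)
  fix v assume pv: "\<exists>k. (F ^^ k) (0, v) = (0, 0)"
  have S: "Sec (fsec v)" and f0v: "fsec v 0 = v" using fsec[OF pv] by auto
  obtain k where k: "\<forall>z\<in>ball 0 \<epsilon>. (z, fsec v z) \<in> Z k" and c: "continuous_on (ball 0 \<epsilon>) (fsec v)"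
    using S unfolding Sec_def by blast
  show "fsec v holomorphic_on ball 0 \<epsilon>"
    by (rule section_holo[OF open_ball order_refl c]) (use k in blast)
  show "fsec v 0 = v" by (rule f0v)
  have "(F ^^ k) ` graph_on \<epsilon> (fsec v) \<subseteq> graph_on e0 f0"
    using k by (auto simp: graph_on_def Z_def G0_def)
  then show "\<exists>k. (F ^^ k) ` graph_on \<epsilon> (fsec v) \<subseteq> graph_on e0 f0" by blast
next
  fix v v' assume H: "(\<exists>k. (F ^^ k) (0, v) = (0, 0)) \<and> (\<exists>k. (F ^^ k) (0, v') = (0, 0)) \<and> v \<noteq> v'"
  have S1: "Sec (fsec v)" "fsec v 0 = v" using fsec H by auto
  have S2: "Sec (fsec v')" "fsec v' 0 = v'" using fsec H by auto
  show "graph_on \<epsilon> (fsec v) \<inter> graph_on \<epsilon> (fsec v') = {}"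
  proof (rule equals0I)
    fix p assume "p \<in> graph_on \<epsilon> (fsec v) \<inter> graph_on \<epsilon> (fsec v')"
    then obtain z where z: "z \<in> ball 0 \<epsilon>" "fsec v z = fsec v' z" by (auto simp: graph_on_def)
    have "fsec v 0 = fsec v' 0" by (rule sec_same[OF S1(1) S2(1) z]) (use eps in simp)
    then show False using S1(2) S2(2) H by simp
  qed
next
  fix z u assume H: "z \<in> ball 0 \<epsilon> \<and> (\<exists>k. (F ^^ k) (z, u) \<in> graph_on e0 f0)"
  then obtain k where "(z, u) \<in> Z k" by (auto simp: Z_def G0_def)
  from lift_exists[OF this] obtain h where h: "continuous_on (ball 0 \<epsilon>) h" "h z = u" "\<forall>z\<in>ball 0 \<epsilon>. (z, h z) \<in> Z k"
    by blast
  have Sh: "Sec h" unfolding Sec_def using h by blast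
  have "(0, h 0) \<in> Z k" using h(3) eps by simp
  then have pv: "\<exists>k. (F ^^ k) (0, h 0) = (0, 0)" using Z_pre by blast
  have S: "Sec (fsec (h 0))" "fsec (h 0) 0 = h 0" using fsec[OF pv] by auto
  have "fsec (h 0) z = h z" by (rule sec_same[OF S(1) Sh _ S(2)]) (use eps H in auto)
  then show "\<exists>v. (\<exists>k. (F ^^ k) (0, v) = (0, 0)) \<and> u = fsec v z" using pv h(2) by metis
qed

end

theorem lemma3p6:
  fixes P :: "complex poly" and Qc :: "nat \<Rightarrow> complex poly"
    and e0 r :: real and f0 :: "complex \<Rightarrow> complex"
  assumes "classA P Qc"
    and "local_strong_stable P Qc e0 r f0"
  shows "\<exists>\<epsilon>>0. \<exists>f :: complex \<Rightarrow> complex \<Rightarrow> complex.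
    (\<forall>v. (\<exists>k. (skew P Qc ^^ k) (0, v) = (0, 0)) \<longrightarrow>
        f v holomorphic_on ball 0 \<epsilon> \<and> f v 0 = v \<and>
        (\<exists>k. (skew P Qc ^^ k) ` graph_on \<epsilon> (f v) \<subseteq> graph_on e0 f0)) \<and>
    (\<forall>v v'. (\<exists>k. (skew P Qc ^^ k) (0, v) = (0, 0)) \<and> (\<exists>k. (skew P Qc ^^ k) (0, v') = (0, 0))
        \<and> v \<noteq> v' \<longrightarrow> graph_on \<epsilon> (f v) \<inter> graph_on \<epsilon> (f v') = {}) \<and>
    (\<forall>z u. z \<in> ball 0 \<epsilon> \<and> (\<exists>k. (skew P Qc ^^ k) (z, u) \<in> graph_on e0 f0) \<longrightarrow>
        (\<exists>v. (\<exists>k. (skew P Qc ^^ k) (0, v) = (0, 0)) \<and> u = f v z))"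
proof -
  interpret LA P Qc e0 r f0 using assms by unfold_locales
  obtain \<epsilon> R where e: "0 < \<epsilon>" "\<epsilon> \<le> 1" "\<epsilon> \<le> e0" "\<forall>z. norm z < \<epsilon> \<longrightarrow> norm (poly P z) < \<epsilon>"
    "\<forall>z u. norm z < \<epsilon> \<longrightarrow> (z, u) \<in> W \<longrightarrow> Qw P Qc z u \<noteq> 0 \<and> norm u < R"
    using good_eps by blast
  interpret LB P Qc e0 r f0 \<epsilon> R
    by unfold_locales (use e in auto)
  show ?thesis using main e(1) by blast
qed


end
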